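(* Let $X$ be a Banach space with $n(X)=1$ that has the BPBpp-nu. Then $X$ is uniformly smooth.
   Context: Let $X$ be a Banach space over $\mathbb{K}\in\{\mathbb{R},\mathbb{C}\}$, $\mathcal{L}(X)$ the bounded linear operators on $X$. $\Pi(X)=\{(x,x^* )\in S_X\times S_{X^*}: x^*(x)=1\}$; $v(T)=\sup\{|x^*(Tx)|:(x,x^* )\in\Pi(X)\}$; $n(X)=\inf\{v(T): T\in\mathcal{L}(X),\ \|T\|=1\}$. $X$ has the BPBpp-nu if for every $\varepsilon>0$ there is $\eta(\varepsilon)>0$ such that whenever $T\in\mathcal{L}(X)$ with $v(T)=1$ and $(x,x^* )\in\Pi(X)$ satisfy $|x^*(Tx)|>1-\eta(\varepsilon)$, there exists $S\in\mathcal{L}(X)$ with $v(S)=1$, $|x^*(Sx)|=1$ and $\|S-T\|<\varepsilon$. *)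

theory Defs
  imports "HOL-Analysis.Analysis"
begin

(* Scalar field K in {R, C}: modelled as a real normed field 'k (by Ostrowski's theorem
   every real normed field, i.e. a field extension of R with a multiplicative norm
   extending |.|, is isomorphic to R or C).  The Banach space X is a real Banach space
   'a :: banach together with a compatible scalar multiplication sm by elements of 'k. *)

definition scalar_action :: "('k::real_normed_field \<Rightarrow> 'a::real_normed_vector \<Rightarrow> 'a) \<Rightarrow> bool" where
  "scalar_action sm \<longleftrightarrow>
     (\<forall>r x. sm (of_real r) x = r *\<^sub>R x) \<and>
     (\<forall>a b x. sm (a * b) x = sm a (sm b x)) \<and>
     (\<forall>a b x. sm (a + b) x = sm a x + sm b x) \<and>
     (\<forall>a x y. sm a (x + y) = sm a x + sm a y) \<and>
     (\<forall>a x. norm (sm a x) = norm a * norm x)"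

definition K_operator :: "('k::real_normed_field \<Rightarrow> 'a::real_normed_vector \<Rightarrow> 'a) \<Rightarrow> ('a \<Rightarrow>\<^sub>L 'a) \<Rightarrow> bool" where
  "K_operator sm T \<longleftrightarrow> (\<forall>c x. blinfun_apply T (sm c x) = sm c (blinfun_apply T x))"

definition K_functional :: "('k::real_normed_field \<Rightarrow> 'a::real_normed_vector \<Rightarrow> 'a) \<Rightarrow> ('a \<Rightarrow>\<^sub>L 'k) \<Rightarrow> bool" where
  "K_functional sm f \<longleftrightarrow> (\<forall>c x. blinfun_apply f (sm c x) = c * blinfun_apply f x)"

definition Pi_X :: "('k::real_normed_field \<Rightarrow> 'a::real_normed_vector \<Rightarrow> 'a) \<Rightarrow> ('a \<times> ('a \<Rightarrow>\<^sub>L 'k)) set" where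
  "Pi_X sm = {(x, f). norm x = 1 \<and> K_functional sm f \<and> norm f = 1 \<and> blinfun_apply f x = 1}"

definition num_radius :: "('k::real_normed_field \<Rightarrow> 'a::real_normed_vector \<Rightarrow> 'a) \<Rightarrow> ('a \<Rightarrow>\<^sub>L 'a) \<Rightarrow> real" where
  "num_radius sm T = Sup ((\<lambda>(x, f). norm (blinfun_apply f (blinfun_apply T x))) ` Pi_X sm)"

definition num_index :: "('k::real_normed_field \<Rightarrow> 'a::real_normed_vector \<Rightarrow> 'a) \<Rightarrow> real" where
  "num_index sm = Inf {num_radius sm T | T. K_operator sm T \<and> norm T = 1}"

definition BPBpp_nu :: "('k::real_normed_field \<Rightarrow> 'a::real_normed_vector \<Rightarrow> 'a) \<Rightarrow> bool" where
  "BPBpp_nu sm \<longleftrightarrow>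
     (\<forall>\<epsilon>>0. \<exists>\<eta>>0. \<forall>T x f.
        K_operator sm T \<and> num_radius sm T = 1 \<and> (x, f) \<in> Pi_X sm \<and>
        norm (blinfun_apply f (blinfun_apply T x)) > 1 - \<eta> \<longrightarrow>
        (\<exists>S. K_operator sm S \<and> num_radius sm S = 1 \<and>
             norm (blinfun_apply f (blinfun_apply S x)) = 1 \<and> norm (S - T) < \<epsilon>))"

definition modulus_smoothness :: "'a::real_normed_vector itself \<Rightarrow> real \<Rightarrow> real" where
  "modulus_smoothness _ \<tau> =
     Sup {(norm (x + \<tau> *\<^sub>R y) + norm (x - \<tau> *\<^sub>R y)) / 2 - 1 | x y :: 'a. norm x = 1 \<and> norm y = 1}"

definition uniformly_smooth :: "'a::real_normed_vector itself \<Rightarrow> bool" where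
  "uniformly_smooth A \<longleftrightarrow> ((\<lambda>\<tau>. modulus_smoothness A \<tau> / \<tau>) \<longlongrightarrow> 0) (at_right 0)"

end

theory Submission
  imports Defs "HOL-Computational_Algebra.Polynomial"
begin

lemma mpr_add: "map_poly (of_real :: real \<Rightarrow> 'b::real_algebra_1) (p + q) = map_poly of_real p + map_poly of_real q"
  by (intro poly_eqI) (simp add: coeff_map_poly)

lemma mpr_diff: "map_poly (of_real :: real \<Rightarrow> 'b::real_algebra_1) (p - q) = map_poly of_real p - map_poly of_real q"
  by (intro poly_eqI) (simp add: coeff_map_poly)

lemma mpr_mult: "map_poly (of_real :: real \<Rightarrow> 'b::{real_algebra_1,comm_ring_1}) (p * q) = map_poly of_real p * map_poly of_real q"
  by (intro poly_eqI) (simp add: coeff_map_poly coeff_mult of_real_sum)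

lemma mpr_one: "map_poly (of_real :: real \<Rightarrow> 'b::{real_algebra_1,comm_ring_1}) 1 = 1"
  by simp

lemma mpr_const: "map_poly (of_real :: real \<Rightarrow> 'b::{real_algebra_1,comm_ring_1}) [:c:] = [:of_real c:]"
  by (simp add: map_poly_pCons)

lemma mpr_power: "map_poly (of_real :: real \<Rightarrow> 'b::{real_algebra_1,comm_ring_1}) (p ^ n) = (map_poly of_real p) ^ n"
  by (induction n) (simp_all add: mpr_mult)

lemma mpr_prod: "map_poly (of_real :: real \<Rightarrow> 'b::{real_algebra_1,comm_ring_1}) (prod f A) = (\<Prod>k\<in>A. map_poly of_real (f k))"
  by (induction A rule: infinite_finite_induct) (simp_all add: mpr_mult)

lemma mpr_smult: "map_poly (of_real :: real \<Rightarrow> 'b::{real_algebra_1,comm_ring_1}) (smult c p) = smult (of_real c) (map_poly of_real p)"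
  by (intro poly_eqI) (simp add: coeff_map_poly)

lemma mpr_inj: "map_poly (of_real :: real \<Rightarrow> complex) p = map_poly of_real q \<Longrightarrow> p = q"
  by (simp add: poly_eq_iff coeff_map_poly)

lemma prod_roots_lemma:
  fixes a b :: complex and r :: "nat \<Rightarrow> complex"
  assumes n: "n > 0" and b: "b \<noteq> 0" and inj: "inj_on r {..<n}" and ru: "\<And>k. k < n \<Longrightarrow> r k ^ n = 1"
  shows "(\<Prod>k<n. [:-(a + b * r k), 1:]) = [:-a, 1:] ^ n - [:b ^ n:]"
proof (rule ccontr)
  define P where "P = (\<Prod>k<n. [:-(a + b * r k), 1:])"
  define Q where "Q = [:-a, 1:] ^ n - [:b ^ n:]"
  define D where "D = Q - P"
  assume "\<not> ?thesis"
  hence D0: "D \<noteq> 0" by (simp add: D_def P_def Q_def)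
  have degP: "degree P = n"
    unfolding P_def by (subst degree_prod_eq_sum_degree) auto
  have "lead_coeff P = 1" unfolding P_def by (simp add: lead_coeff_prod)
  hence lcP: "coeff P n = 1" using degP by simp
  have degQ1: "degree ([:-a, 1:] ^ n) = n" by (simp add: degree_linear_power)
  have lcQ1: "coeff ([:-a, 1:] ^ n) n = 1" using degQ1 lead_coeff_power[of "[:-a,1:]" n] by simp
  have cD: "coeff D i = 0" if "i \<ge> n" for i
  proof (cases "i = n")
    case True
    thus ?thesis using lcP lcQ1 n by (cases n) (simp_all add: D_def Q_def)
  next
    case False
    hence "i > n" using that by simp
    thus ?thesis using degP degQ1 n by (simp add: D_def Q_def coeff_eq_0)
  qed
  have degD: "degree D < n"
  proof -
    have "degree D \<le> n - 1" by (rule degree_le) (use cD n in auto)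
    thus ?thesis using n by simp
  qed
  have roots: "(\<lambda>k. a + b * r k) ` {..<n} \<subseteq> {x. poly D x = 0}"
  proof (rule image_subsetI)
    fix k assume k: "k \<in> {..<n}"
    have "poly P (a + b * r k) = 0"
      unfolding P_def poly_prod using k by (intro prod_zero) auto
    moreover have "poly Q (a + b * r k) = 0"
      using ru[of k] k by (simp add: Q_def power_mult_distrib)
    ultimately show "a + b * r k \<in> {x. poly D x = 0}" by (simp add: D_def)
  qed
  have "inj_on (\<lambda>k. a + b * r k) {..<n}"
    using inj b by (auto simp: inj_on_def)
  hence "card ((\<lambda>k. a + b * r k) ` {..<n}) = n" by (simp add: card_image)
  moreover have "card ((\<lambda>k. a + b * r k) ` {..<n}) \<le> card {x. poly D x = 0}"
    using roots poly_roots_finite[OF D0] by (intro card_mono) auto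
  moreover have "card {x. poly D x = 0} \<le> degree D"
    by (rule card_poly_roots_bound[OF D0])
  ultimately show False using degD by simp
qed


definition Qr :: "complex \<Rightarrow> real poly" where
  "Qr z = [:(cmod z)^2, -2 * Re z, 1:]"

lemma phi_Qr: "map_poly complex_of_real (Qr z) = [:-z, 1:] * [:-cnj z, 1:]"
proof -
  have "z * cnj z = complex_of_real ((cmod z)^2)" using complex_norm_square[of z] by simp
  moreover have "- z - cnj z = complex_of_real (-2 * Re z)"
    by (simp add: complex_eq_iff)
  ultimately show ?thesis
    by (simp add: Qr_def map_poly_pCons algebra_simps)
qed

fun UV :: "complex \<Rightarrow> nat \<Rightarrow> real poly \<times> real poly" where
  "UV z 0 = (1, 0)"
| "UV z (Suc n) = ([:-Re z, 1:] * fst (UV z n) + smult (Im z) (snd (UV z n)),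
                   [:-Re z, 1:] * snd (UV z n) - smult (Im z) (fst (UV z n)))"

lemma UV_phi:
  "map_poly complex_of_real (fst (UV z n)) + smult \<i> (map_poly complex_of_real (snd (UV z n))) = [:-z,1:] ^ n
   \<and> map_poly complex_of_real (fst (UV z n)) - smult \<i> (map_poly complex_of_real (snd (UV z n))) = [:-cnj z,1:] ^ n"
proof (induction n)
  case 0
  then show ?case by simp
next
  case (Suc n)
  define A where "A = map_poly complex_of_real (fst (UV z n))"
  define B where "B = map_poly complex_of_real (snd (UV z n))"
  have IH1: "A + smult \<i> B = [:-z,1:] ^ n" and IH2: "A - smult \<i> B = [:-cnj z,1:] ^ n"
    using Suc by (simp_all add: A_def B_def)
  have L: "map_poly complex_of_real [:-Re z, 1:] = [:- complex_of_real (Re z), 1:]"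
    by (simp add: map_poly_pCons)
  have ez: "[:-z,1:] = [:- complex_of_real (Re z), 1:] - smult (\<i> * complex_of_real (Im z)) 1"
    by (simp add: complex_eq_iff)
  have ecz: "[:-cnj z,1:] = [:- complex_of_real (Re z), 1:] + smult (\<i> * complex_of_real (Im z)) 1"
    by (simp add: complex_eq_iff)
  define X where "X = [:- complex_of_real (Re z), 1:]"
  define I where "I = [:\<i>:]"
  define Bc where "Bc = [:complex_of_real (Im z):]"
  have II: "I * I = -1" by (simp add: I_def one_pCons)
  have sm: "\<And>c p. smult c p = [:c:] * p" by simp
  have E1: "map_poly complex_of_real (fst (UV z (Suc n))) = X * A + Bc * B"
    unfolding UV.simps fst_conv mpr_add mpr_mult mpr_smult L A_def B_def X_def Bc_def sm mpr_const ..
  have E2: "map_poly complex_of_real (snd (UV z (Suc n))) = X * B - Bc * A"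
    unfolding UV.simps snd_conv mpr_diff mpr_mult mpr_smult L A_def B_def X_def Bc_def sm mpr_const ..
  have ez': "[:-z,1:] = X - I * Bc"
    unfolding X_def I_def Bc_def by (simp add: complex_eq_iff)
  have ecz': "[:-cnj z,1:] = X + I * Bc"
    unfolding X_def I_def Bc_def by (simp add: complex_eq_iff)
  have I1: "smult \<i> p = I * p" for p by (simp add: I_def)
  have G1: "X * A + Bc * B + I * (X * B - Bc * A) = (X - I * Bc) * (A + I * B)"
    using II by algebra
  have G2: "X * A + Bc * B - I * (X * B - Bc * A) = (X + I * Bc) * (A - I * B)"
    using II by algebra
  have P1: "[:-z,1:]^Suc n = (X - I*Bc) * (A + I*B)"
    using IH1 ez' by (simp add: I1)
  have P2: "[:-cnj z,1:]^Suc n = (X + I*Bc) * (A - I*B)"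
    using IH2 ecz' by (simp add: I1)
  show ?case
    unfolding E1 E2 I1 P1 P2 using G1 G2 by simp
qed


lemma alg_aux:
  fixes A B I C1 C2 R1 R2 :: "'a::comm_ring_1"
  assumes "C2 + C1 = R1" "I * C2 - I * C1 = R2"
  shows "(A + I*B - C1) * (A - I*B - C2) = (A + I*B) * (A - I*B) - (R1 * A + R2 * B) + C1 * C2"
proof -
  have "(A + I*B - C1) * (A - I*B - C2) = (A + I*B) * (A - I*B) - ((C2 + C1) * A + (I * C2 - I * C1) * B) + C1 * C2"
    by (simp add: algebra_simps)
  thus ?thesis using assms by simp
qed

lemma real_ident:
  fixes z0 w :: complex
  assumes n: "n > 0" and w: "w \<noteq> 0"
  shows "(\<Prod>k<n. Qr (z0 + w * cis (2 * pi * real k / real n))) =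
         Qr z0 ^ n - (smult (2 * Re (w ^ n)) (fst (UV z0 n)) + smult (2 * Im (w ^ n)) (snd (UV z0 n)))
         + [:cmod w ^ (2 * n):]"
proof (rule mpr_inj)
  define r where "r k = cis (2 * pi * real k / real n)" for k
  have inj: "inj_on r {..<n}"
    using Complex.bij_betw_roots_unity[OF n] unfolding r_def bij_betw_def by blast
  have ru: "r k ^ n = 1" if "k < n" for k
    using Complex.bij_betw_roots_unity[OF n] that unfolding r_def bij_betw_def by blast
  have inj': "inj_on (\<lambda>k. cnj (r k)) {..<n}"
    using inj by (auto simp: inj_on_def)
  have ru': "cnj (r k) ^ n = 1" if "k < n" for k
    using ru[OF that] by (metis complex_cnj_one complex_cnj_power)
  define A where "A = map_poly complex_of_real (fst (UV z0 n))"
  define B where "B = map_poly complex_of_real (snd (UV z0 n))"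
  define I where "I = [:\<i>:]"
  have I1: "smult \<i> p = I * p" for p by (simp add: I_def)
  have HA: "A + I * B = [:-z0,1:] ^ n" and HB: "A - I * B = [:-cnj z0,1:] ^ n"
    using UV_phi[of z0 n] by (simp_all add: A_def B_def I1)
  define c where "c = w ^ n"
  have "map_poly complex_of_real (\<Prod>k<n. Qr (z0 + w * r k))
        = (\<Prod>k<n. [:-(z0 + w * r k), 1:] * [:-cnj (z0 + w * r k), 1:])"
    by (simp only: mpr_prod phi_Qr)
  also have "\<dots> = (\<Prod>k<n. [:-(z0 + w * r k), 1:]) * (\<Prod>k<n. [:-(cnj z0 + cnj w * cnj (r k)), 1:])"
    by (simp only: prod.distrib complex_cnj_add complex_cnj_mult)
  also have "\<dots> = ([:-z0, 1:] ^ n - [:c:]) * ([:-cnj z0, 1:] ^ n - [:cnj c:])"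
    using prod_roots_lemma[OF n w inj ru, of z0] prod_roots_lemma[OF n _ inj' ru', of "cnj w" "cnj z0"] w
    by (simp add: c_def)
  also have "\<dots> = (A + I * B - [:c:]) * (A - I * B - [:cnj c:])"
    using HA HB by simp
  also have "\<dots> = map_poly complex_of_real (Qr z0 ^ n - (smult (2 * Re c) (fst (UV z0 n)) + smult (2 * Im c) (snd (UV z0 n)))
         + [:cmod w ^ (2 * n):])"
  proof -
    have e1: "map_poly complex_of_real (Qr z0 ^ n) = (A + I * B) * (A - I * B)"
      by (simp only: mpr_power phi_Qr HA HB power_mult_distrib)
    have sm: "\<And>c p. smult c p = [:c:] * p" by simp
    have e2: "map_poly complex_of_real (smult (2 * Re c) (fst (UV z0 n)) + smult (2 * Im c) (snd (UV z0 n)))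
       = [:complex_of_real (2 * Re c):] * A + [:complex_of_real (2 * Im c):] * B"
      by (simp add: mpr_add mpr_smult A_def B_def)
    have e3: "map_poly complex_of_real [:cmod w ^ (2 * n):] = [:c:] * [:cnj c:]"
    proof -
      have "c * cnj c = complex_of_real (cmod w ^ (2*n))"
      proof -
        have "c * cnj c = complex_of_real (cmod c ^ 2)" using complex_norm_square[of c] by simp
        moreover have "cmod c ^ 2 = cmod w ^ (2*n)" unfolding c_def norm_power
          by (simp add: power_mult[symmetric] mult.commute)
        ultimately show ?thesis by simp
      qed
      thus ?thesis by (simp add: mpr_const mult.commute)
    qed
    have r1: "[:cnj c:] + [:c:] = [:complex_of_real (2 * Re c):]"
      by (simp add: complex_eq_iff)
    have r2: "I * [:cnj c:] - I * [:c:] = [:complex_of_real (2 * Im c):]"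
      by (simp add: I_def complex_eq_iff)
    have II: "I * I = -1" by (simp add: I_def one_pCons)
    have alg: "(A + I * B - [:c:]) * (A - I * B - [:cnj c:]) =
       (A + I * B) * (A - I * B) - ([:complex_of_real (2 * Re c):] * A + [:complex_of_real (2 * Im c):] * B) + [:c:] * [:cnj c:]"
      by (rule alg_aux[OF r1 r2])
    show ?thesis unfolding alg by (simp only: mpr_add mpr_diff e1 e3 e2[unfolded mpr_add])
  qed
  finally show "map_poly complex_of_real (\<Prod>k<n. Qr (z0 + w * cis (2 * pi * real k / real n))) =
    map_poly complex_of_real (Qr z0 ^ n - (smult (2 * Re (w ^ n)) (fst (UV z0 n)) + smult (2 * Im (w ^ n)) (snd (UV z0 n)))
         + [:cmod w ^ (2 * n):])"
    by (simp add: r_def c_def)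
qed


definition evk :: "'k::real_normed_field \<Rightarrow> real poly \<Rightarrow> 'k" where
  "evk x p = poly (map_poly of_real p) x"

lemma evk_mult: "evk x (p * q) = evk x p * evk x q"
  by (simp add: evk_def mpr_mult)
lemma evk_add: "evk x (p + q) = evk x p + evk x q"
  by (simp add: evk_def mpr_add)
lemma evk_diff: "evk x (p - q) = evk x p - evk x q"
  by (simp add: evk_def mpr_diff)
lemma evk_smult: "evk x (smult c p) = of_real c * evk x p"
  by (simp add: evk_def mpr_smult)
lemma evk_const: "evk x [:c:] = of_real c"
  by (simp add: evk_def mpr_const)
lemma evk_power: "evk x (p ^ n) = evk x p ^ n"
  by (simp add: evk_def mpr_power)
lemma evk_prod: "evk x (prod f A) = (\<Prod>k\<in>A. evk x (f k))"
  by (simp add: evk_def mpr_prod poly_prod)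
lemma evk_lin: "evk x [:a, 1:] = of_real a + x"
  by (simp add: evk_def map_poly_pCons)

lemma evk_Qr: "evk x (Qr z) = x * x - of_real (2 * Re z) * x + of_real ((cmod z)^2)"
  by (simp add: evk_def Qr_def map_poly_pCons algebra_simps)

lemma UV_bound:
  fixes x :: "'k::real_normed_field"
  shows "norm (evk x (fst (UV z n))) + norm (evk x (snd (UV z n))) \<le> (norm x + \<bar>Re z\<bar> + \<bar>Im z\<bar>) ^ n"
proof (induction n)
  case 0
  then show ?case by (simp add: evk_def)
next
  case (Suc n)
  define u where "u = evk x (fst (UV z n))"
  define v where "v = evk x (snd (UV z n))"
  have e1: "evk x (fst (UV z (Suc n))) = (x - of_real (Re z)) * u + of_real (Im z) * v"
    unfolding UV.simps fst_conv evk_add evk_mult evk_smult evk_lin u_def v_def by (simp add: algebra_simps)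
  have e2: "evk x (snd (UV z (Suc n))) = (x - of_real (Re z)) * v - of_real (Im z) * u"
    unfolding UV.simps snd_conv evk_diff evk_mult evk_smult evk_lin u_def v_def by (simp add: algebra_simps)
  have nxr: "norm (x - of_real (Re z)) \<le> norm x + \<bar>Re z\<bar>"
    using norm_triangle_ineq4[of x "of_real (Re z)"] by simp
  have "norm (evk x (fst (UV z (Suc n)))) \<le> (norm x + \<bar>Re z\<bar>) * norm u + \<bar>Im z\<bar> * norm v"
    unfolding e1 using norm_triangle_ineq[of "(x - of_real (Re z)) * u" "of_real (Im z) * v"]
      mult_right_mono[OF nxr norm_ge_zero[of u]] by (simp add: norm_mult)
  moreover have "norm (evk x (snd (UV z (Suc n)))) \<le> (norm x + \<bar>Re z\<bar>) * norm v + \<bar>Im z\<bar> * norm u"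
    unfolding e2 using norm_triangle_ineq4[of "(x - of_real (Re z)) * v" "of_real (Im z) * u"]
      mult_right_mono[OF nxr norm_ge_zero[of v]] by (simp add: norm_mult)
  ultimately have "norm (evk x (fst (UV z (Suc n)))) + norm (evk x (snd (UV z (Suc n))))
      \<le> (norm x + \<bar>Re z\<bar> + \<bar>Im z\<bar>) * (norm u + norm v)"
    by (simp add: algebra_simps)
  also have "\<dots> \<le> (norm x + \<bar>Re z\<bar> + \<bar>Im z\<bar>) * (norm x + \<bar>Re z\<bar> + \<bar>Im z\<bar>) ^ n"
    using Suc.IH by (intro mult_left_mono) (simp_all add: u_def v_def)
  finally show ?case by simp
qed


lemma prod_ineq:
  fixes x :: "'k::real_normed_field" and z0 w :: complex
  assumes n: "n > 0" and w: "w \<noteq> 0"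
  defines "F \<equiv> (\<lambda>z. norm (x * x - of_real (2 * Re z) * x + of_real ((cmod z)^2)))"
  shows "(\<Prod>k<n. F (z0 + w * cis (2 * pi * real k / real n))) \<le>
         F z0 ^ n + 2 * cmod w ^ n * (norm x + \<bar>Re z0\<bar> + \<bar>Im z0\<bar>) ^ n + cmod w ^ (2 * n)"
proof -
  define c where "c = w ^ n"
  define u where "u = evk x (fst (UV z0 n))"
  define v where "v = evk x (snd (UV z0 n))"
  have FQ: "F z = norm (evk x (Qr z))" for z by (simp add: F_def evk_Qr)
  have "(\<Prod>k<n. F (z0 + w * cis (2 * pi * real k / real n))) =
        norm (evk x (\<Prod>k<n. Qr (z0 + w * cis (2 * pi * real k / real n))))"
    by (simp add: FQ evk_prod prod_norm)
  also have "\<dots> = norm (evk x (Qr z0) ^ n - (of_real (2 * Re c) * u + of_real (2 * Im c) * v) + of_real (cmod w ^ (2 * n)))"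
    unfolding real_ident[OF n w] evk_add evk_diff evk_power evk_smult evk_const u_def v_def c_def ..
  also have "\<dots> \<le> norm (evk x (Qr z0) ^ n) + norm (of_real (2 * Re c) * u + of_real (2 * Im c) * v) + norm (of_real (cmod w ^ (2 * n)) :: 'k)"
    by (rule order_trans[OF norm_triangle_ineq]) (simp add: norm_triangle_ineq4)
  also have "norm (evk x (Qr z0) ^ n) = F z0 ^ n" by (simp add: FQ norm_power)
  also have "norm (of_real (cmod w ^ (2 * n)) :: 'k) = cmod w ^ (2 * n)" by (simp only: norm_of_real) simp
  also have "norm (of_real (2 * Re c) * u + of_real (2 * Im c) * v) \<le> 2 * cmod c * (norm u + norm v)"
  proof -
    have "norm (of_real (2 * Re c) * u + of_real (2 * Im c) * v) \<le> 2 * \<bar>Re c\<bar> * norm u + 2 * \<bar>Im c\<bar> * norm v"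
      using norm_triangle_ineq[of "of_real (2 * Re c) * u" "of_real (2 * Im c) * v"] by (simp add: norm_mult)
    also have "\<dots> \<le> 2 * cmod c * norm u + 2 * cmod c * norm v"
      by (intro add_mono mult_right_mono) (simp_all add: abs_Re_le_cmod abs_Im_le_cmod)
    finally show ?thesis by (simp add: algebra_simps)
  qed
  also have "2 * cmod c * (norm u + norm v) \<le> 2 * cmod w ^ n * (norm x + \<bar>Re z0\<bar> + \<bar>Im z0\<bar>) ^ n"
    using mult_left_mono[OF UV_bound[of x z0 n], of "2 * cmod w ^ n"] by (simp add: c_def norm_power u_def v_def mult.assoc)
  finally show ?thesis by simp
qed


lemma quad_root:
  fixes x :: "'k::real_normed_field"
  shows "\<exists>z::complex. x * x - of_real (2 * Re z) * x + of_real ((cmod z)^2) = 0"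
proof (rule ccontr)
  define F where "F = (\<lambda>z::complex. norm (x * x - of_real (2 * Re z) * x + of_real ((cmod z)^2)))"
  assume nr: "\<not> ?thesis"
  hence Fpos: "F z > 0" for z by (simp add: F_def)
  have cont: "continuous_on UNIV F" unfolding F_def by (intro continuous_intros)
  define R where "R = 3 * norm x + 1"
  have F0: "F 0 = norm x ^ 2" by (simp add: F_def norm_mult power2_eq_square)
  have coer: "F z > F 0" if "cmod z > R" for z
  proof -
    have "cmod z ^ 2 = norm (of_real ((cmod z)^2) :: 'k)" by (simp only: norm_of_real) simp
    also have "\<dots> \<le> F z + norm (x * x) + norm (of_real (2 * Re z) * x)"
    proof -
      have tri: "norm (t - a + b) \<le> norm t + norm a + norm b" for t a b :: 'k
        by (rule order_trans[OF norm_triangle_ineq]) (simp add: norm_triangle_ineq4)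
      have "(of_real ((cmod z)^2) :: 'k) = (x * x - of_real (2 * Re z) * x + of_real ((cmod z)^2)) - x * x + of_real (2 * Re z) * x"
        by simp
      thus ?thesis unfolding F_def by (metis tri)
    qed
    also have "norm (of_real (2 * Re z) * x) \<le> 2 * cmod z * norm x"
      by (simp add: norm_mult abs_Re_le_cmod mult_right_mono)
    finally have "cmod z ^ 2 \<le> F z + norm x ^ 2 + 2 * cmod z * norm x"
      by (simp add: norm_mult power2_eq_square)
    moreover have "cmod z * cmod z > 2 * norm x ^ 2 + 2 * cmod z * norm x"
    proof -
      have "cmod z - 2 * norm x > norm x + 1" using that R_def by simp
      moreover have "cmod z > 0" using that R_def by (smt (verit) norm_ge_zero)
      ultimately have "cmod z * (cmod z - 2 * norm x) > cmod z * (norm x + 1)"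
        by (intro mult_strict_left_mono) auto
      moreover have "cmod z * (norm x + 1) \<ge> (3 * norm x + 1) * (norm x + 1)"
        using that R_def by (intro mult_right_mono) auto
      moreover have "(3 * norm x + 1) * (norm x + 1) > 2 * norm x ^ 2"
        by (simp add: power2_eq_square algebra_simps) (smt (verit) norm_ge_zero mult_nonneg_nonneg)
      ultimately show ?thesis by (simp add: algebra_simps)
    qed
    ultimately show ?thesis using F0 by (simp add: power2_eq_square)
  qed
  have Rpos: "R \<ge> 0" by (simp add: R_def)
  have cne: "cball (0::complex) R \<noteq> {}" using Rpos by simp
  have contc: "continuous_on (cball 0 R) F" using cont by (rule continuous_on_subset) simp
  obtain zs where zs: "zs \<in> cball 0 R" "\<And>z. z \<in> cball 0 R \<Longrightarrow> F zs \<le> F z"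
    using continuous_attains_inf[OF compact_cball cne contc] by blast
  define m where "m = F zs"
  have mmin: "m \<le> F z" for z
  proof (cases "z \<in> cball 0 R")
    case True thus ?thesis using zs m_def by simp
  next
    case False
    hence "F z > F 0" using coer by simp
    moreover have "F zs \<le> F 0" using zs(2)[of 0] R_def by simp
    ultimately show ?thesis using m_def by simp
  qed
  have mpos: "m > 0" using Fpos m_def by simp
  define S where "S = {z. F z = m}"
  have Ssub: "S \<subseteq> cball 0 R"
  proof
    fix z assume "z \<in> S"
    show "z \<in> cball 0 R"
    proof (rule ccontr)
      assume "z \<notin> cball 0 R"
      hence "F z > F 0" using coer by simp
      moreover have "F zs \<le> F 0" using zs(2)[of 0] R_def by simp
      ultimately show False using \<open>z \<in> S\<close> S_def m_def by simp
    qed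
  qed
  have Scl: "closed S" unfolding S_def
    using continuous_closed_preimage_constant[OF cont closed_UNIV] by simp
  have Scomp: "compact S" using Ssub Scl bounded_subset[OF bounded_cball Ssub] compact_eq_bounded_closed by blast
  have Sne: "S \<noteq> {}" using m_def S_def by auto
  obtain z0 where z0: "z0 \<in> S" "\<And>z. z \<in> S \<Longrightarrow> cmod z \<le> cmod z0"
    using continuous_attains_sup[OF Scomp Sne, of norm] continuous_on_norm_id by blast
  define C where "C = norm x + \<bar>Re z0\<bar> + \<bar>Im z0\<bar>"
  have C0: "C \<ge> 0" by (simp add: C_def)
  define \<delta> where "\<delta> = min 1 m / (2 * (C + 1))"
  have dpos: "\<delta> > 0" using mpos C0 by (simp add: \<delta>_def)
  have dC: "\<delta> * C < m"
  proof -
    have "\<delta> * C \<le> m / (2 * (C + 1)) * C" unfolding \<delta>_def using C0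
      by (intro mult_right_mono divide_right_mono) auto
    also have "\<dots> < m" using mpos C0 by (simp add: field_simps add_nonneg_pos mult_nonneg_nonneg)
    finally show ?thesis .
  qed
  have d1: "\<delta> < 1" unfolding \<delta>_def using C0 by (simp add: field_simps)
  have dm: "\<delta> \<le> m / 2"
  proof -
    have "\<delta> \<le> m / (2 * (C + 1))" unfolding \<delta>_def using C0 by (intro divide_right_mono) auto
    also have "\<dots> \<le> m / 2" using C0 mpos by (intro divide_left_mono) auto
    finally show ?thesis .
  qed
  have d2: "\<delta>^2 < m"
  proof -
    have "\<delta> * \<delta> < 1 * \<delta>" using dpos d1 by (intro mult_strict_right_mono) auto
    thus ?thesis using dm mpos by (simp add: power2_eq_square)
  qed
  define u where "u = (if z0 = 0 then 1 else sgn z0)"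
  define w where "w = complex_of_real \<delta> * u"
  have cu: "cmod u = 1" by (simp add: u_def norm_sgn)
  have cw: "cmod w = \<delta>" using dpos cu by (simp add: w_def norm_mult)
  have w0: "w \<noteq> 0" using cw dpos by auto
  have cz1: "cmod (z0 + w) = cmod z0 + \<delta>"
  proof (cases "z0 = 0")
    case True thus ?thesis using cw by (simp add: w_def u_def)
  next
    case False
    have "z0 + w = complex_of_real (cmod z0 + \<delta>) * sgn z0"
      using False by (simp add: w_def u_def sgn_div_norm algebra_simps of_real_def)
    hence "cmod (z0 + w) = cmod (complex_of_real (cmod z0 + \<delta>)) * cmod (sgn z0)" by (simp only: norm_mult)
    thus ?thesis using False dpos by (simp only: norm_of_real norm_sgn) simp
  qed
  have Fz1: "F (z0 + w) > m"
  proof -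
    have "z0 + w \<notin> S" using z0(2)[of "z0 + w"] cz1 dpos by auto
    thus ?thesis using mmin[of "z0 + w"] S_def by auto
  qed
  have key: "F (z0 + w) * m ^ (n - 1) \<le> m ^ n + 2 * (\<delta> * C) ^ n + (\<delta>^2) ^ n" if n: "n > 0" for n
  proof -
    obtain n' where n': "n = Suc n'" using n by (cases n) auto
    define zk where "zk k = z0 + w * cis (2 * pi * real k / real n)" for k
    have "F (z0 + w) * m ^ (n - 1) \<le> F (zk 0) * (\<Prod>k<n'. F (zk (Suc k)))"
    proof -
      have "m ^ n' = (\<Prod>k<n'. m)" by simp
      also have "\<dots> \<le> (\<Prod>k<n'. F (zk (Suc k)))"
        by (intro prod_mono) (use mpos mmin in auto)
      finally have "m ^ n' \<le> (\<Prod>k<n'. F (zk (Suc k)))" .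
      moreover have "zk 0 = z0 + w" by (simp add: zk_def)
      ultimately show ?thesis using n' Fz1 mpos by (simp add: mult_left_mono)
    qed
    also have "\<dots> = (\<Prod>k<n. F (zk k))" unfolding n' prod.lessThan_Suc_shift ..
    also have "\<dots> \<le> F z0 ^ n + 2 * cmod w ^ n * C ^ n + cmod w ^ (2 * n)"
      using prod_ineq[OF n w0, of x z0] unfolding zk_def C_def F_def .
    also have "\<dots> = m ^ n + 2 * (\<delta> * C) ^ n + (\<delta>^2) ^ n"
      using z0(1) S_def cw by (simp add: power_mult_distrib power_mult)
    finally show ?thesis .
  qed
  define \<alpha> where "\<alpha> = \<delta> * C / m"
  define \<beta> where "\<beta> = \<delta>^2 / m"
  have a: "0 \<le> \<alpha>" "\<alpha> < 1" using dC mpos dpos C0 by (simp_all add: \<alpha>_def)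
  have b: "0 \<le> \<beta>" "\<beta> < 1" using d2 mpos by (simp_all add: \<beta>_def)
  have lim: "(\<lambda>n. 2 * \<alpha> ^ n + \<beta> ^ n) \<longlonglongrightarrow> 2 * 0 + 0"
    by (intro tendsto_intros LIMSEQ_power_zero) (use a b in auto)
  have "F (z0 + w) / m - 1 > 0" using Fz1 mpos by simp
  hence "eventually (\<lambda>n. 2 * \<alpha> ^ n + \<beta> ^ n < F (z0 + w) / m - 1) sequentially"
    using lim by (simp add: order_tendstoD(2))
  moreover have "eventually (\<lambda>n. n > (0::nat)) sequentially" by (simp add: eventually_gt_at_top)
  ultimately have "eventually (\<lambda>n. 2 * \<alpha> ^ n + \<beta> ^ n < F (z0 + w) / m - 1 \<and> n > 0) sequentially"
    by (rule eventually_conj)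
  then obtain N where "\<forall>n\<ge>N. 2 * \<alpha> ^ n + \<beta> ^ n < F (z0 + w) / m - 1 \<and> n > 0"
    unfolding eventually_sequentially by blast
  then obtain n where n: "n > 0" "2 * \<alpha> ^ n + \<beta> ^ n < F (z0 + w) / m - 1" by blast
  have "F (z0 + w) * m ^ (n - 1) / m ^ n \<le> (m ^ n + 2 * (\<delta> * C) ^ n + (\<delta>^2) ^ n) / m ^ n"
    using key[OF n(1)] mpos by (intro divide_right_mono) auto
  moreover have "F (z0 + w) * m ^ (n - 1) / m ^ n = F (z0 + w) / m"
    using n(1) mpos by (cases n) (auto simp: field_simps)
  moreover have "(m ^ n + 2 * (\<delta> * C) ^ n + (\<delta>^2) ^ n) / m ^ n = 1 + 2 * \<alpha> ^ n + \<beta> ^ n"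
    using mpos by (simp add: \<alpha>_def \<beta>_def field_simps power_divide)
  ultimately show False using n(2) by simp
qed


definition goodG :: "'a::real_normed_vector \<Rightarrow> ('a \<times> real) set \<Rightarrow> bool" where
  "goodG p G \<longleftrightarrow> (0, 0) \<in> G \<and> (\<forall>x s y t. (x, s) \<in> G \<longrightarrow> (y, t) \<in> G \<longrightarrow> (x + y, s + t) \<in> G)
     \<and> (\<forall>x s c. (x, s) \<in> G \<longrightarrow> (c *\<^sub>R x, c * s) \<in> G)
     \<and> (\<forall>x s t. (x, s) \<in> G \<longrightarrow> (x, t) \<in> G \<longrightarrow> s = t)
     \<and> (\<forall>x s. (x, s) \<in> G \<longrightarrow> s \<le> norm x) \<and> (p, norm p) \<in> G"

lemma goodG_D:
  assumes "goodG p G"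
  shows "(0,0) \<in> G" "\<And>x s y t. (x, s) \<in> G \<Longrightarrow> (y, t) \<in> G \<Longrightarrow> (x + y, s + t) \<in> G"
    "\<And>x s c. (x, s) \<in> G \<Longrightarrow> (c *\<^sub>R x, c * s) \<in> G"
    "\<And>x s t. (x, s) \<in> G \<Longrightarrow> (x, t) \<in> G \<Longrightarrow> s = t"
    "\<And>x s. (x, s) \<in> G \<Longrightarrow> s \<le> norm x" "(p, norm p) \<in> G"
  using assms unfolding goodG_def by blast+

lemma goodG_extend:
  fixes p :: "'a::real_normed_vector"
  assumes G: "goodG p G" and z: "\<forall>s. (z, s) \<notin> G"
  shows "\<exists>G'. goodG p G' \<and> G \<subseteq> G' \<and> G' \<noteq> G"
proof -
  have G0: "(0,0) \<in> G" and Gadd: "\<And>x s y t. (x, s) \<in> G \<Longrightarrow> (y, t) \<in> G \<Longrightarrow> (x + y, s + t) \<in> G"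
    and Gsc: "\<And>x s c. (x, s) \<in> G \<Longrightarrow> (c *\<^sub>R x, c * s) \<in> G"
    and Gfun: "\<And>x s t. (x, s) \<in> G \<Longrightarrow> (x, t) \<in> G \<Longrightarrow> s = t"
    and Gb: "\<And>x s. (x, s) \<in> G \<Longrightarrow> s \<le> norm x" and Gp: "(p, norm p) \<in> G"
    using goodG_D[OF G] by blast+
  define A where "A = {s - norm (x - z) | x s. (x, s) \<in> G}"
  define c where "c = Sup A"
  have Ane: "A \<noteq> {}" using G0 A_def by blast
  have key: "s - norm (x - z) \<le> norm (y + z) - t" if "(x, s) \<in> G" "(y, t) \<in> G" for x s y t
  proof -
    have "s + t \<le> norm (x + y)" using Gb[OF Gadd[OF that]] .
    also have "x + y = (x - z) + (y + z)" by simp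
    also have "norm \<dots> \<le> norm (x - z) + norm (y + z)" by (rule norm_triangle_ineq)
    finally show ?thesis by simp
  qed
  have Abdd: "bdd_above A" unfolding bdd_above_def A_def using key[OF _ G0] by force
  have cup: "s - norm (x - z) \<le> c" if "(x, s) \<in> G" for x s
    unfolding c_def by (rule cSup_upper[OF _ Abdd]) (use that A_def in blast)
  have clow: "c \<le> norm (y + z) - t" if "(y, t) \<in> G" for y t
    unfolding c_def by (rule cSup_least[OF Ane]) (use key that A_def in blast)
  define G' where "G' = {(x + a *\<^sub>R z, s + a * c) | x s a. (x, s) \<in> G}"
  have "goodG p G'"
    unfolding goodG_def
  proof (intro conjI allI impI)
    have "(0::'a) = 0 + 0 *\<^sub>R z" "(0::real) = 0 + 0 * c" by simp_all
    thus "(0, 0) \<in> G'" unfolding G'_def using G0 by blast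
    have "p = p + 0 *\<^sub>R z" "norm p = norm p + 0 * c" by simp_all
    thus "(p, norm p) \<in> G'" unfolding G'_def using Gp by blast
  next
    fix x s y t assume "(x, s) \<in> G'" "(y, t) \<in> G'"
    then obtain x1 s1 a1 x2 s2 a2 where "(x1, s1) \<in> G" "(x2, s2) \<in> G"
      "x = x1 + a1 *\<^sub>R z" "s = s1 + a1 * c" "y = x2 + a2 *\<^sub>R z" "t = s2 + a2 * c"
      unfolding G'_def by blast
    hence "(x1 + x2, s1 + s2) \<in> G" "x + y = (x1 + x2) + (a1 + a2) *\<^sub>R z" "s + t = (s1 + s2) + (a1 + a2) * c"
      using Gadd by (simp_all add: algebra_simps scaleR_add_left)
    thus "(x + y, s + t) \<in> G'" unfolding G'_def by blast
  next
    fix x s d assume "(x, s) \<in> G'"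
    then obtain x1 s1 a1 where "(x1, s1) \<in> G" "x = x1 + a1 *\<^sub>R z" "s = s1 + a1 * c"
      unfolding G'_def by blast
    hence "(d *\<^sub>R x1, d * s1) \<in> G" "d *\<^sub>R x = d *\<^sub>R x1 + (d * a1) *\<^sub>R z" "d * s = d * s1 + (d * a1) * c"
      using Gsc[of x1 s1 d] by (simp_all add: algebra_simps scaleR_add_right)
    thus "(d *\<^sub>R x, d * s) \<in> G'" unfolding G'_def by blast
  next
    fix x s t assume "(x, s) \<in> G'" "(x, t) \<in> G'"
    then obtain x1 s1 a1 x2 s2 a2 where h: "(x1, s1) \<in> G" "(x2, s2) \<in> G"
      "x = x1 + a1 *\<^sub>R z" "s = s1 + a1 * c" "x = x2 + a2 *\<^sub>R z" "t = s2 + a2 * c"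
      unfolding G'_def by blast
    show "s = t"
    proof (cases "a1 = a2")
      case True
      hence "x1 = x2" using h by simp
      thus ?thesis using h True Gfun by simp
    next
      case False
      have "(x2 + (-1) *\<^sub>R x1, s2 + (-1) * s1) \<in> G" using Gadd[OF h(2) Gsc[OF h(1)]] .
      hence "((1 / (a1 - a2)) *\<^sub>R (x2 + (-1) *\<^sub>R x1), (1 / (a1 - a2)) * (s2 + (-1) * s1)) \<in> G"
        by (rule Gsc)
      moreover have "(1 / (a1 - a2)) *\<^sub>R (x2 + (-1) *\<^sub>R x1) = z"
      proof -
        have "x2 - x1 = (a1 - a2) *\<^sub>R z" using h by (simp add: algebra_simps)
        thus ?thesis using False by (simp add: scaleR_diff_left[symmetric])
      qed
      ultimately show ?thesis using z by simp
    qed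
  next
    fix x s assume "(x, s) \<in> G'"
    then obtain x1 s1 a where h: "(x1, s1) \<in> G" "x = x1 + a *\<^sub>R z" "s = s1 + a * c"
      unfolding G'_def by blast
    show "s \<le> norm x"
    proof (cases a "0::real" rule: linorder_cases)
      case equal thus ?thesis using h Gb by simp
    next
      case greater
      have "((1/a) *\<^sub>R x1, (1/a) * s1) \<in> G" using Gsc h by blast
      hence "c \<le> norm ((1/a) *\<^sub>R x1 + z) - (1/a) * s1" by (rule clow)
      hence "a * c \<le> a * (norm ((1/a) *\<^sub>R x1 + z) - (1/a) * s1)" using greater by simp
      also have "\<dots> = \<bar>a\<bar> * norm ((1/a) *\<^sub>R x1 + z) - s1" using greater by (simp add: algebra_simps)
      also have "\<bar>a\<bar> * norm ((1/a) *\<^sub>R x1 + z) = norm (a *\<^sub>R ((1/a) *\<^sub>R x1 + z))" by (simp only: norm_scaleR)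
      also have "a *\<^sub>R ((1/a) *\<^sub>R x1 + z) = x1 + a *\<^sub>R z" using greater by (simp add: scaleR_add_right)
      finally show ?thesis using h by simp
    next
      case less
      define b where "b = - a"
      have bpos: "b > 0" using less b_def by simp
      have "((1/b) *\<^sub>R x1, (1/b) * s1) \<in> G" using Gsc h by blast
      hence "(1/b) * s1 - norm ((1/b) *\<^sub>R x1 - z) \<le> c" by (rule cup)
      hence "b * ((1/b) * s1 - norm ((1/b) *\<^sub>R x1 - z)) \<le> b * c" using bpos by simp
      moreover have "b * ((1/b) * s1 - norm ((1/b) *\<^sub>R x1 - z)) = s1 - \<bar>b\<bar> * norm ((1/b) *\<^sub>R x1 - z)"
        using bpos by (simp add: algebra_simps)
      moreover have "\<bar>b\<bar> * norm ((1/b) *\<^sub>R x1 - z) = norm (b *\<^sub>R ((1/b) *\<^sub>R x1 - z))" by (simp only: norm_scaleR)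
      moreover have "b *\<^sub>R ((1/b) *\<^sub>R x1 - z) = x1 + a *\<^sub>R z" using bpos b_def by (simp add: scaleR_diff_right)
      ultimately have E: "s1 - norm (x1 + a *\<^sub>R z) \<le> b * c" by simp
      have "b * c = - (a * c)" by (simp add: b_def)
      thus ?thesis using E h by simp
    qed
  qed
  moreover have "G \<subseteq> G'"
  proof
    fix q assume "q \<in> G"
    then obtain x s where "q = (x, s)" "(x, s) \<in> G" by (cases q) auto
    moreover have "x = x + 0 *\<^sub>R z" "s = s + 0 * c" by simp_all
    ultimately show "q \<in> G'" unfolding G'_def by blast
  qed
  moreover have "(z, c) \<in> G'"
  proof -
    have "z = 0 + 1 *\<^sub>R z" "c = 0 + 1 * c" by simp_all
    thus ?thesis unfolding G'_def using G0 by blast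
  qed
  hence "G' \<noteq> G" using z by blast
  ultimately show ?thesis by blast
qed

lemma real_HB:
  fixes p :: "'a::real_normed_vector"
  assumes p: "p \<noteq> 0"
  shows "\<exists>g. bounded_linear g \<and> g p = norm p \<and> (\<forall>x. \<bar>g x\<bar> \<le> norm x)"
proof -
  define \<A> where "\<A> = {G. goodG p G}"
  define G0 where "G0 = {(c *\<^sub>R p, c * norm p) | c. True}"
  have "goodG p G0"
    unfolding goodG_def G0_def
  proof (intro conjI allI impI)
    have "(0::'a) = 0 *\<^sub>R p" "(0::real) = 0 * norm p" by simp_all
    thus "(0,0) \<in> {(c *\<^sub>R p, c * norm p) | c. True}" by blast
    have "p = 1 *\<^sub>R p" "norm p = 1 * norm p" by simp_all
    thus "(p, norm p) \<in> {(c *\<^sub>R p, c * norm p) | c. True}" by blast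
  next
    fix x s y t assume "(x, s) \<in> {(c *\<^sub>R p, c * norm p) | c. True}" "(y, t) \<in> {(c *\<^sub>R p, c * norm p) | c. True}"
    then obtain c1 c2 where "x = c1 *\<^sub>R p" "s = c1 * norm p" "y = c2 *\<^sub>R p" "t = c2 * norm p" by blast
    hence "x + y = (c1 + c2) *\<^sub>R p" "s + t = (c1 + c2) * norm p" by (simp_all add: algebra_simps scaleR_add_left)
    thus "(x + y, s + t) \<in> {(c *\<^sub>R p, c * norm p) | c. True}" by blast
  next
    fix x s d assume "(x, s) \<in> {(c *\<^sub>R p, c * norm p) | c. True}"
    then obtain c1 where "x = c1 *\<^sub>R p" "s = c1 * norm p" by blast
    hence "d *\<^sub>R x = (d * c1) *\<^sub>R p" "d * s = (d * c1) * norm p" by simp_all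
    thus "(d *\<^sub>R x, d * s) \<in> {(c *\<^sub>R p, c * norm p) | c. True}" by blast
  next
    fix x s t assume "(x, s) \<in> {(c *\<^sub>R p, c * norm p) | c. True}" "(x, t) \<in> {(c *\<^sub>R p, c * norm p) | c. True}"
    then obtain c1 c2 where "x = c1 *\<^sub>R p" "s = c1 * norm p" "x = c2 *\<^sub>R p" "t = c2 * norm p" by blast
    thus "s = t" using p by (simp add: scaleR_cancel_right)
  next
    fix x s assume "(x, s) \<in> {(c *\<^sub>R p, c * norm p) | c. True}"
    then obtain c1 where "x = c1 *\<^sub>R p" "s = c1 * norm p" by blast
    thus "s \<le> norm x" using mult_right_mono[OF abs_ge_self norm_ge_zero, of c1 p] by simp
  qed
  hence Ane: "\<A> \<noteq> {}" using \<A>_def by blast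
  have ch: "\<Union>\<C> \<in> \<A>" if cne: "\<C> \<noteq> {}" and cch: "subset.chain \<A> \<C>" for \<C>
  proof -
    have sub: "\<C> \<subseteq> \<A>" and cmp: "\<And>X Y. X \<in> \<C> \<Longrightarrow> Y \<in> \<C> \<Longrightarrow> X \<subseteq> Y \<or> Y \<subseteq> X"
      using cch unfolding subset_chain_def by blast+
    have gd: "\<And>X. X \<in> \<C> \<Longrightarrow> goodG p X" using sub \<A>_def by blast
    obtain X0 where X0: "X0 \<in> \<C>" using cne by blast
    show ?thesis unfolding \<A>_def mem_Collect_eq goodG_def
    proof (intro conjI allI impI)
      show "(0, 0) \<in> \<Union>\<C>" using goodG_D(1)[OF gd[OF X0]] X0 by blast
      show "(p, norm p) \<in> \<Union>\<C>" using goodG_D(6)[OF gd[OF X0]] X0 by blast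
    next
      fix x s y t assume "(x, s) \<in> \<Union>\<C>" "(y, t) \<in> \<Union>\<C>"
      then obtain X Y where "X \<in> \<C>" "Y \<in> \<C>" "(x, s) \<in> X" "(y, t) \<in> Y" by blast
      thus "(x + y, s + t) \<in> \<Union>\<C>" using cmp[of X Y] goodG_D(2)[OF gd[of X]] goodG_D(2)[OF gd[of Y]] by blast
    next
      fix x s d assume "(x, s) \<in> \<Union>\<C>"
      then obtain X where "X \<in> \<C>" "(x, s) \<in> X" by blast
      thus "(d *\<^sub>R x, d * s) \<in> \<Union>\<C>" using goodG_D(3)[OF gd[of X]] by blast
    next
      fix x s t assume "(x, s) \<in> \<Union>\<C>" "(x, t) \<in> \<Union>\<C>"
      then obtain X Y where "X \<in> \<C>" "Y \<in> \<C>" "(x, s) \<in> X" "(x, t) \<in> Y" by blast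
      thus "s = t" using cmp[of X Y] goodG_D(4)[OF gd[of X]] goodG_D(4)[OF gd[of Y]] by blast
    next
      fix x s assume "(x, s) \<in> \<Union>\<C>"
      then obtain X where "X \<in> \<C>" "(x, s) \<in> X" by blast
      thus "s \<le> norm x" using goodG_D(5)[OF gd[of X]] by blast
    qed
  qed
  obtain M where M: "M \<in> \<A>" "\<And>X. X \<in> \<A> \<Longrightarrow> M \<subseteq> X \<Longrightarrow> X = M"
    using subset_Zorn_nonempty[OF Ane ch] by blast
  have gM: "goodG p M" using M \<A>_def by blast
  have tot: "\<exists>s. (z, s) \<in> M" for z
  proof (rule ccontr)
    assume "\<not> ?thesis"
    then obtain G' where "goodG p G'" "M \<subseteq> G'" "G' \<noteq> M" using goodG_extend[OF gM] by blast
    thus False using M(2)[of G'] \<A>_def by blast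
  qed
  note MD = goodG_D[OF gM]
  have Mfun: "\<And>x s t. (x, s) \<in> M \<Longrightarrow> (x, t) \<in> M \<Longrightarrow> s = t" by (rule MD(4))
  define g where "g z = (THE s. (z, s) \<in> M)" for z
  have gM': "(z, g z) \<in> M" for z
    unfolding g_def using tot[of z] Mfun by (metis theI)
  have gval: "(z, s) \<in> M \<Longrightarrow> g z = s" for z s using gM' Mfun by blast
  have lin: "linear g"
  proof
    fix x y show "g (x + y) = g x + g y"
      using gval[OF MD(2)[OF gM'[of x] gM'[of y]]] .
  next
    fix r x show "g (r *\<^sub>R x) = r *\<^sub>R g x"
      using gval[OF MD(3)[OF gM'[of x], of r]] by simp
  qed
  have bnd: "\<bar>g x\<bar> \<le> norm x" for x
  proof -
    have "g x \<le> norm x" using MD(5)[OF gM'[of x]] .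
    moreover have "g ((-1) *\<^sub>R x) \<le> norm ((-1) *\<^sub>R x)" using MD(5)[OF gM'[of "(-1) *\<^sub>R x"]] .
    moreover have "g ((-1) *\<^sub>R x) = - g x" using linear_scale[OF lin, of "-1" x] by simp
    ultimately show ?thesis by simp
  qed
  have "bounded_linear g"
  proof (rule bounded_linear_intro[where K = 1])
    show "g (x + y) = g x + g y" for x y using lin by (rule linear_add)
    show "g (r *\<^sub>R x) = r *\<^sub>R g x" for r x using lin by (rule linear_scale)
    show "norm (g x) \<le> norm x * 1" for x using bnd[of x] by simp
  qed
  moreover have "g p = norm p" using gval[OF MD(6)] .
  ultimately show ?thesis using bnd by blast
qed


lemma kfield_struct:
  fixes c :: "'k::real_normed_field"
  obtains a b :: real where "c = of_real a + of_real b * c" "b = 0"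
  | a b :: real and j :: 'k where "j * j = -1" "c = of_real a + of_real b * j"
proof -
  obtain z :: complex where z: "c * c - of_real (2 * Re z) * c + of_real ((cmod z)^2) = 0"
    using quad_root by blast
  define a where "a = Re z"
  define b where "b = Im z"
  have cz: "(cmod z)^2 = a^2 + b^2" by (simp add: a_def b_def cmod_power2)
  have sq: "(c - of_real a) * (c - of_real a) = - of_real (b^2)"
  proof -
    have "(c - of_real a) * (c - of_real a) + of_real (b^2) = c * c - of_real (2 * Re z) * c + of_real ((cmod z)^2)"
      unfolding cz by (simp add: a_def algebra_simps power2_eq_square)
    thus ?thesis using z by (simp add: eq_neg_iff_add_eq_0)
  qed
  show ?thesis
  proof (cases "b = 0")
    case True
    hence "c = of_real a" using sq by simp
    thus ?thesis using that(1)[of a 0] by simp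
  next
    case False
    define j where "j = (c - of_real a) / of_real b"
    have "j * j = ((c - of_real a) * (c - of_real a)) / (of_real b * of_real b)"
      by (simp add: j_def)
    also have "\<dots> = -1" using False by (simp add: sq power2_eq_square)
    finally have "j * j = -1" .
    moreover have "c = of_real a + of_real b * j" using False by (simp add: j_def)
    ultimately show ?thesis using that(2) by blast
  qed
qed

lemma kfield_i:
  fixes c i :: "'k::real_normed_field"
  assumes i: "i * i = -1"
  shows "\<exists>a b. c = of_real a + of_real b * i"
proof (cases c rule: kfield_struct)
  case (1 a b) thus ?thesis by (intro exI[of _ a] exI[of _ 0]) simp
next
  case (2 a b j)
  have "(j - i) * (j + i) = 0" using 2(1) i by (simp add: algebra_simps)
  hence "j = i \<or> j = - i" by (simp add: eq_neg_iff_add_eq_0)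
  thus ?thesis
  proof
    assume "j = i" thus ?thesis using 2 by blast
  next
    assume "j = - i" thus ?thesis using 2 by (intro exI[of _ a] exI[of _ "-b"]) simp
  qed
qed

lemma kfield_noi:
  fixes c :: "'k::real_normed_field"
  assumes "\<forall>i::'k. i * i \<noteq> -1"
  shows "\<exists>a. c = of_real a"
proof (cases c rule: kfield_struct)
  case (1 a b) thus ?thesis by auto
next
  case (2 a b j) thus ?thesis using assms by blast
qed

lemma i_not_real:
  fixes i :: "'k::real_normed_field"
  assumes i: "i * i = -1"
  shows "i \<noteq> of_real r"
proof
  assume "i = of_real r"
  hence "of_real (r * r) = (-1 :: 'k)" using i by simp
  hence "r * r = -1" by (metis of_real_eq_iff of_real_minus of_real_1)
  moreover have "r * r \<ge> 0" by simp
  ultimately show False by simp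
qed

lemma norm_i:
  fixes i :: "'k::real_normed_field"
  assumes i: "i * i = -1"
  shows "norm i = 1"
proof -
  have "norm i * norm i = 1" using i by (metis norm_minus_cancel norm_mult norm_one)
  hence "sqrt (norm i * norm i) = 1" by simp
  moreover have "sqrt (norm i * norm i) = norm i" by simp
  ultimately show ?thesis by simp
qed

lemma norm_circle:
  fixes i :: "'k::real_normed_field"
  assumes i: "i * i = -1" and pq: "p^2 + q^2 = 1"
  shows "norm (of_real p + of_real q * i) = 1"
proof -
  define T where "T = {of_real p + of_real q * i | p q. p^2 + q^2 = (1::real)}"
  have Tmul: "s * t \<in> T" if sT: "s \<in> T" and tT: "t \<in> T" for s t
  proof -
    obtain p1 q1 p2 q2 where h: "s = of_real p1 + of_real q1 * i" "p1^2 + q1^2 = 1"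
      "t = of_real p2 + of_real q2 * i" "p2^2 + q2^2 = 1" using sT tT T_def by blast
    have ii: "i * (i * x) = - x" for x using i by (metis mult.assoc mult_minus1)
    have "s * t = of_real (p1 * p2 - q1 * q2) + of_real (p1 * q2 + q1 * p2) * i"
      using h by (simp add: algebra_simps ii)
    moreover have "(p1 * p2 - q1 * q2)^2 + (p1 * q2 + q1 * p2)^2 = 1"
    proof -
      have "(p1 * p2 - q1 * q2)^2 + (p1 * q2 + q1 * p2)^2 = (p1^2 + q1^2) * (p2^2 + q2^2)"
        by (simp add: power2_eq_square algebra_simps)
      thus ?thesis using h by simp
    qed
    ultimately show ?thesis unfolding T_def by blast
  qed
  have Tbd: "norm t \<le> 2" if tT: "t \<in> T" for t
  proof -
    obtain p1 q1 where h: "t = of_real p1 + of_real q1 * i" "p1^2 + q1^2 = 1" using tT T_def by blast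
    have "p1^2 \<le> 1" "q1^2 \<le> 1" using h(2) zero_le_power2[of p1] zero_le_power2[of q1] by linarith+
    hence "\<bar>p1\<bar> \<le> 1" "\<bar>q1\<bar> \<le> 1" by (simp_all add: abs_square_le_1)
    moreover have "norm t \<le> \<bar>p1\<bar> + \<bar>q1\<bar>" using h(1) norm_triangle_ineq[of "of_real p1" "of_real q1 * i"] norm_i[OF i]
      by (simp add: norm_mult)
    ultimately show ?thesis by simp
  qed
  have Tpow: "t ^ n \<in> T" if "t \<in> T" for t n
  proof (induction n)
    case 0
    have "t ^ 0 = of_real 1 + of_real 0 * i" "(1::real)^2 + 0^2 = 1" by simp_all
    thus ?case unfolding T_def by blast
  next
    case (Suc n) thus ?case using Tmul[OF that] by simp
  qed
  have le1: "norm t \<le> 1" if "t \<in> T" for t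
  proof (rule ccontr)
    assume "\<not> ?thesis"
    then obtain n where "2 < norm t ^ n" using real_arch_pow[of "norm t" 2] by force
    thus False using Tbd[OF Tpow[OF that, of n]] by (simp add: norm_power)
  qed
  define t where "t = of_real p + of_real q * i"
  define t' where "t' = of_real p + of_real (-q) * i"
  have pq': "p^2 + (-q)^2 = 1" using pq by simp
  have tT: "t \<in> T" "t' \<in> T" unfolding T_def t_def t'_def using pq pq' by blast+
  have ii: "i * (i * x) = - x" for x using i by (metis mult.assoc mult_minus1)
  have "t * t' = of_real (p^2 + q^2)" unfolding t_def t'_def by (simp add: algebra_simps power2_eq_square ii)
  hence "norm t * norm t' = 1" using pq by (simp add: norm_mult[symmetric])
  moreover have "norm t \<le> 1" "norm t' \<le> 1" using le1 tT by auto
  ultimately have "norm t = 1"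
  proof -
    assume a: "norm t * norm t' = 1" "norm t \<le> 1" "norm t' \<le> 1"
    show "norm t = 1"
    proof (rule ccontr)
      assume "norm t \<noteq> 1"
      hence "norm t < 1" using a by simp
      hence "norm t * norm t' \<le> norm t * 1" using a by (intro mult_left_mono) auto
      thus False using a \<open>norm t < 1\<close> by simp
    qed
  qed
  thus ?thesis by (simp add: t_def)
qed

lemma norm_ai:
  fixes i :: "'k::real_normed_field"
  assumes i: "i * i = -1"
  shows "norm (of_real a + of_real b * i) = sqrt (a^2 + b^2)"
proof (cases "a = 0 \<and> b = 0")
  case True thus ?thesis by simp
next
  case False
  define r where "r = sqrt (a^2 + b^2)"
  have "a^2 + b^2 > 0" using False by (simp add: add_pos_nonneg sum_power2_gt_zero_iff)
  hence rpos: "r > 0" by (simp add: r_def)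
  have r2: "r^2 = a^2 + b^2" unfolding r_def by (rule real_sqrt_pow2) simp
  have "(a / r)^2 + (b / r)^2 = (a^2 + b^2) / r^2"
    by (simp add: power_divide add_divide_distrib)
  hence "(a / r)^2 + (b / r)^2 = 1" using r2 rpos False by simp
  hence "norm (of_real (a / r) + of_real (b / r) * i) = 1" by (rule norm_circle[OF i])
  moreover have "of_real a + of_real b * i = of_real r * (of_real (a / r) + of_real (b / r) * i)"
    using rpos by (simp add: algebra_simps of_real_divide[symmetric] of_real_mult[symmetric] del: of_real_mult of_real_divide)
  ultimately show ?thesis using rpos by (simp add: norm_mult r_def)
qed


context
  fixes sm :: "'k::real_normed_field \<Rightarrow> 'a::real_normed_vector \<Rightarrow> 'a"
  assumes sa: "scalar_action sm"
begin

lemma sm_real: "sm (of_real r) x = r *\<^sub>R x" using sa unfolding scalar_action_def by blast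
lemma sm_mult: "sm (a * b) x = sm a (sm b x)" using sa unfolding scalar_action_def by blast
lemma sm_addl: "sm (a + b) x = sm a x + sm b x" using sa unfolding scalar_action_def by blast
lemma sm_addr: "sm a (x + y) = sm a x + sm a y" using sa unfolding scalar_action_def by blast
lemma sm_norm: "norm (sm a x) = norm a * norm x" using sa unfolding scalar_action_def by blast

lemma sm_scaleR: "sm c (r *\<^sub>R x) = r *\<^sub>R sm c x"
proof -
  have "sm c (r *\<^sub>R x) = sm c (sm (of_real r) x)" by (simp add: sm_real)
  also have "\<dots> = sm (c * of_real r) x" by (simp add: sm_mult)
  also have "\<dots> = sm (of_real r * c) x" by (simp add: mult.commute)
  also have "\<dots> = r *\<^sub>R sm c x" by (simp add: sm_mult sm_real)
  finally show ?thesis .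
qed

lemma sm_one: "sm 1 x = x" using sm_real[of 1 x] by simp

lemma sm_minus_one: "sm (-1) x = - x" using sm_real[of "-1" x] by simp

lemma bl_sm: "bounded_linear (sm c)"
proof (rule bounded_linear_intro[where K = "norm c"])
  show "sm c (x + y) = sm c x + sm c y" for x y by (rule sm_addr)
  show "sm c (r *\<^sub>R x) = r *\<^sub>R sm c x" for r x by (rule sm_scaleR)
  show "norm (sm c x) \<le> norm x * norm c" for x by (simp add: sm_norm mult.commute)
qed

lemma K_HB:
  assumes p: "norm p = 1"
  shows "\<exists>f. K_functional sm f \<and> norm f = 1 \<and> blinfun_apply f p = 1"
proof -
  have p0: "p \<noteq> 0" using p by auto
  obtain g where bg: "bounded_linear g" and gp: "g p = 1" and gb: "\<And>x. \<bar>g x\<bar> \<le> norm x"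
    using real_HB[OF p0] p by auto
  have gadd: "g (x + y) = g x + g y" for x y using bg by (rule linear_add[OF bounded_linear.linear])
  have gsc: "g (r *\<^sub>R x) = r * g x" for r x using linear_scale[OF bounded_linear.linear[OF bg]] by simp
  have blr: "bounded_linear (\<lambda>x. (of_real (g x) :: 'k))"
    using bounded_linear_compose[OF bounded_linear_of_real bg] by (simp add: o_def)
  show ?thesis
  proof (cases "\<exists>i::'k. i * i = -1")
    case True
    then obtain i :: 'k where i: "i * i = -1" by blast
    have ii: "i * (i * x) = - x" for x using i by (metis mult.assoc mult_minus1)
    define F where "F x = of_real (g x) - of_real (g (sm i x)) * i" for x
    have blF: "bounded_linear F"
    proof -
      have b2: "bounded_linear (\<lambda>x. (of_real (g (sm i x)) :: 'k))"
        using bounded_linear_compose[OF blr bl_sm[of i]] by (simp add: o_def)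
      have "bounded_linear (\<lambda>x. (of_real (g (sm i x)) :: 'k) * i)"
        using bounded_linear_compose[OF bounded_linear_mult_left[of i] b2] by (simp add: o_def)
      thus ?thesis unfolding F_def using blr by (rule bounded_linear_sub[rotated])
    qed
    have Fadd: "F (x + y) = F x + F y" for x y by (simp add: F_def gadd sm_addr algebra_simps)
    have Fsc: "F (r *\<^sub>R x) = of_real r * F x" for r x by (simp add: F_def gsc sm_scaleR algebra_simps)
    have Fi: "F (sm i x) = i * F x" for x
    proof -
      have "sm i (sm i x) = - x" by (simp add: sm_mult[symmetric] i sm_minus_one)
      moreover have "g (- x) = - g x" using gsc[of "-1" x] by simp
      ultimately show ?thesis by (simp add: F_def algebra_simps ii)
    qed
    have Kf: "F (sm c x) = c * F x" for c x
    proof -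
      obtain a b where c: "c = of_real a + of_real b * i" using kfield_i[OF i] by blast
      have "sm c x = a *\<^sub>R x + b *\<^sub>R sm i x" by (simp add: c sm_addl sm_mult sm_real)
      hence "F (sm c x) = of_real a * F x + of_real b * F (sm i x)" by (simp add: Fadd Fsc)
      thus ?thesis by (simp add: Fi c algebra_simps)
    qed
    have Fre: "F y = of_real r \<Longrightarrow> g y = r" for y r
    proof -
      assume h: "F y = of_real r"
      show "g y = r"
      proof (cases "g (sm i y) = 0")
        case True thus ?thesis using h by (simp add: F_def)
      next
        case False
        have "of_real (g (sm i y)) * i = of_real (g y - r)" using h by (simp add: F_def algebra_simps)
        hence "i = of_real ((g y - r) / g (sm i y))" using False
          by (simp add: field_simps)
        thus ?thesis using i_not_real[OF i] by blast
      qed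
    qed
    have Fb: "norm (F x) \<le> norm x" for x
    proof (cases "F x = 0")
      case True thus ?thesis by simp
    next
      case False
      define u where "u = of_real (norm (F x)) / F x"
      have nu: "norm u = 1" using False by (simp add: u_def norm_divide)
      have "F (sm u x) = of_real (norm (F x))" using False by (simp add: Kf u_def)
      hence "g (sm u x) = norm (F x)" by (rule Fre)
      hence "norm (F x) \<le> norm (sm u x)" using gb[of "sm u x"] by simp
      thus ?thesis by (simp add: sm_norm nu)
    qed
    define f where "f = Blinfun F"
    have fa: "blinfun_apply f = F" unfolding f_def using blF by (rule bounded_linear_Blinfun_apply)
    have nf: "norm f \<le> 1" by (rule norm_blinfun_bound) (simp_all add: fa Fb)
    define t where "t = g (sm i p)"
    have Fp: "F p = of_real 1 + of_real (- t) * i" by (simp add: F_def gp t_def)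
    have "sqrt (1 + t^2) = norm (F p)" using norm_ai[OF i, of 1 "-t"] Fp by simp
    also have "\<dots> \<le> 1" using Fb[of p] p by simp
    finally have "1 + t^2 \<le> 1" by simp
    hence "t^2 = 0" using zero_le_power2[of t] by linarith
    hence "t = 0" by simp
    hence Fp1: "F p = 1" using Fp by simp
    have "1 \<le> norm f" using norm_blinfun[of f p] Fp1 p by (simp add: fa)
    hence "norm f = 1" using nf by simp
    moreover have "K_functional sm f" unfolding K_functional_def by (simp add: fa Kf)
    ultimately show ?thesis using Fp1 fa by auto
  next
    case False
    define F where "F x = (of_real (g x) :: 'k)" for x
    have Kf: "F (sm c x) = c * F x" for c x
    proof -
      obtain a where c: "c = of_real a" using kfield_noi False by blast
      show ?thesis by (simp add: F_def c sm_real gsc)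
    qed
    define f where "f = Blinfun F"
    have fa: "blinfun_apply f = F" unfolding f_def F_def using blr by (rule bounded_linear_Blinfun_apply)
    have nf: "norm f \<le> 1" by (rule norm_blinfun_bound) (simp_all add: fa F_def gb)
    have Fp1: "F p = 1" by (simp add: F_def gp)
    have "1 \<le> norm f" using norm_blinfun[of f p] Fp1 p by (simp add: fa)
    hence "norm f = 1" using nf by simp
    moreover have "K_functional sm f" unfolding K_functional_def by (simp add: fa Kf)
    ultimately show ?thesis using Fp1 fa by auto
  qed
qed

end


context
  fixes sm :: "'k::real_normed_field \<Rightarrow> 'a::real_normed_vector \<Rightarrow> 'a"
  assumes sa: "scalar_action sm"
begin

lemma Pi_X_iff: "(x, f) \<in> Pi_X sm \<longleftrightarrow> norm x = 1 \<and> K_functional sm f \<and> norm f = 1 \<and> blinfun_apply f x = 1"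
  by (simp add: Pi_X_def)

lemma Pi_ne: assumes "norm p = 1" shows "\<exists>f. (p, f) \<in> Pi_X sm"
  using K_HB[OF sa assms] by (auto simp: Pi_X_iff assms)

lemma nr_elem_le: "(x, f) \<in> Pi_X sm \<Longrightarrow> norm (blinfun_apply f (blinfun_apply T x)) \<le> norm T"
proof -
  assume h: "(x, f) \<in> Pi_X sm"
  have "norm (blinfun_apply f (blinfun_apply T x)) \<le> norm f * norm (blinfun_apply T x)" by (rule norm_blinfun)
  also have "\<dots> \<le> 1 * (norm T * norm x)" using h norm_blinfun[of T x] by (simp add: Pi_X_iff)
  finally show ?thesis using h by (simp add: Pi_X_iff)
qed

lemma nr_bdd: "bdd_above ((\<lambda>(x, f). norm (blinfun_apply f (blinfun_apply T x))) ` Pi_X sm)"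
  unfolding bdd_above_def by (rule exI[of _ "norm T"]) (auto intro: nr_elem_le)

lemma nr_upper: "(x, f) \<in> Pi_X sm \<Longrightarrow> norm (blinfun_apply f (blinfun_apply T x)) \<le> num_radius sm T"
  unfolding num_radius_def by (rule cSup_upper[OF _ nr_bdd]) force

lemma nr_least: "Pi_X sm \<noteq> {} \<Longrightarrow> (\<And>x f. (x, f) \<in> Pi_X sm \<Longrightarrow> norm (blinfun_apply f (blinfun_apply T x)) \<le> b) \<Longrightarrow> num_radius sm T \<le> b"
  unfolding num_radius_def by (rule cSup_least) auto

lemma nr_le_norm: "Pi_X sm \<noteq> {} \<Longrightarrow> num_radius sm T \<le> norm T"
  by (rule nr_least) (auto intro: nr_elem_le)

lemma nr_nonneg: "Pi_X sm \<noteq> {} \<Longrightarrow> 0 \<le> num_radius sm T"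
proof -
  assume "Pi_X sm \<noteq> {}"
  then obtain x f where "(x, f) \<in> Pi_X sm" by auto
  thus ?thesis using nr_upper[of x f T] norm_ge_zero[of "blinfun_apply f (blinfun_apply T x)"] by linarith
qed

lemma nr_ge_one:
  assumes ne: "Pi_X sm \<noteq> {}" and ni: "num_index sm = 1" and T: "K_operator sm T" "norm T = 1"
  shows "1 \<le> num_radius sm T"
proof -
  have bdd: "bdd_below {num_radius sm T | T. K_operator sm T \<and> norm T = 1}"
    unfolding bdd_below_def using nr_nonneg[OF ne] by blast
  have mem: "num_radius sm T \<in> {num_radius sm T | T. K_operator sm T \<and> norm T = 1}" using T by blast
  have "Inf {num_radius sm T | T. K_operator sm T \<and> norm T = 1} \<le> num_radius sm T"
    by (rule cInf_lower[OF mem bdd])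
  thus ?thesis using ni unfolding num_index_def by simp
qed

lemma Kop_scale: "K_operator sm T \<Longrightarrow> K_operator sm (r *\<^sub>R T)"
  unfolding K_operator_def by (simp add: sm_scaleR[OF sa] blinfun.scaleR_left)

lemma norm_le_one_of_nr:
  assumes ne: "Pi_X sm \<noteq> {}" and ni: "num_index sm = 1" and S: "K_operator sm S" "num_radius sm S = 1"
  shows "norm S \<le> 1"
proof (cases "S = 0")
  case True
  have "num_radius sm S \<le> 0" using nr_le_norm[OF ne, of S] True by simp
  thus ?thesis using S by simp
next
  case False
  define T where "T = (1 / norm S) *\<^sub>R S"
  have nS: "norm S > 0" using False by simp
  have nT: "norm T = 1" using nS by (simp add: T_def)
  have "1 \<le> num_radius sm T" using nr_ge_one[OF ne ni Kop_scale[OF S(1)] ] nT T_def by simp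
  also have "num_radius sm T \<le> 1 / norm S"
  proof (rule nr_least[OF ne])
    fix x f assume h: "(x, f) \<in> Pi_X sm"
    have "norm (blinfun_apply f (blinfun_apply T x)) = (1 / norm S) * norm (blinfun_apply f (blinfun_apply S x))"
      using nS by (simp add: T_def blinfun.scaleR_right blinfun.scaleR_left)
    also have "\<dots> \<le> (1 / norm S) * 1" using nr_upper[OF h, of S] S nS by (intro mult_left_mono) auto
    finally show "norm (blinfun_apply f (blinfun_apply T x)) \<le> 1 / norm S" by simp
  qed
  finally show ?thesis using nS by (simp add: field_simps)
qed

lemma bl_smq: "bounded_linear (\<lambda>c. sm c q)"
proof (rule bounded_linear_intro[where K = "norm q"])
  show "sm (b + c) q = sm b q + sm c q" for b c by (rule sm_addl[OF sa])
  show "sm (r *\<^sub>R c) q = r *\<^sub>R sm c q" for r c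
    by (simp add: scaleR_conv_of_real sm_mult[OF sa] sm_real[OF sa])
  show "norm (sm c q) \<le> norm c * norm q" for c by (simp add: sm_norm[OF sa])
qed

lemma pBPB:
  assumes bp: "BPBpp_nu sm" and ni: "num_index sm = 1" and e: "\<epsilon> > 0"
  obtains \<eta> where "\<eta> > 0" "\<And>q k. norm q = 1 \<Longrightarrow> K_functional sm k \<Longrightarrow> norm k = 1 \<Longrightarrow> norm (blinfun_apply k q) > 1 - \<eta> \<Longrightarrow>
      (\<exists>h. K_functional sm h \<and> norm h \<le> 1 \<and> norm (blinfun_apply h q) = 1 \<and> norm (h - k) < \<epsilon>)"
proof -
  obtain \<eta> where eta: "\<eta> > 0" and H: "\<And>T x f. K_operator sm T \<and> num_radius sm T = 1 \<and> (x, f) \<in> Pi_X sm \<and>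
        norm (blinfun_apply f (blinfun_apply T x)) > 1 - \<eta> \<Longrightarrow>
        (\<exists>S. K_operator sm S \<and> num_radius sm S = 1 \<and>
             norm (blinfun_apply f (blinfun_apply S x)) = 1 \<and> norm (S - T) < \<epsilon>)"
  proof -
    from bp e have "\<exists>\<eta>>0. \<forall>T x f.
        K_operator sm T \<and> num_radius sm T = 1 \<and> (x, f) \<in> Pi_X sm \<and>
        norm (blinfun_apply f (blinfun_apply T x)) > 1 - \<eta> \<longrightarrow>
        (\<exists>S. K_operator sm S \<and> num_radius sm S = 1 \<and>
             norm (blinfun_apply f (blinfun_apply S x)) = 1 \<and> norm (S - T) < \<epsilon>)"
      unfolding BPBpp_nu_def by blast
    thus ?thesis using that by blast
  qed
  show ?thesis
  proof (rule that[OF eta])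
    fix q k assume q: "norm q = 1" and kK: "K_functional sm k" and nk: "norm k = 1"
      and kq: "norm (blinfun_apply k q) > 1 - \<eta>"
    obtain xs where xs: "(q, xs) \<in> Pi_X sm" using Pi_ne[OF q] by blast
    have ne: "Pi_X sm \<noteq> {}" using xs by blast
    define T where "T = Blinfun (\<lambda>y. sm (blinfun_apply k y) q)"
    have blT: "bounded_linear (\<lambda>y. sm (blinfun_apply k y) q)"
      using bounded_linear_compose[OF bl_smq[of q] blinfun.bounded_linear_right[of k]] by (simp add: o_def)
    have Ta: "blinfun_apply T y = sm (blinfun_apply k y) q" for y
      unfolding T_def using blT by (simp add: bounded_linear_Blinfun_apply)
    have TK: "K_operator sm T"
      unfolding K_operator_def Ta using kK unfolding K_functional_def by (simp add: sm_mult[OF sa])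
    have nTy: "norm (blinfun_apply T y) = norm (blinfun_apply k y)" for y by (simp add: Ta sm_norm[OF sa] q)
    have "norm T \<le> 1"
    proof (rule norm_blinfun_bound)
      fix y show "norm (blinfun_apply T y) \<le> 1 * norm y" using norm_blinfun[of k y] nk by (simp add: nTy)
    qed simp
    moreover have "norm k \<le> norm T" by (rule norm_blinfun_bound) (simp_all add: nTy[symmetric] norm_blinfun)
    ultimately have nT: "norm T = 1" using nk by simp
    have nrT: "num_radius sm T = 1"
      using nr_le_norm[OF ne, of T] nr_ge_one[OF ne ni TK nT] nT by simp
    have xsT: "blinfun_apply xs (blinfun_apply T q) = blinfun_apply k q"
    proof -
      have "K_functional sm xs" "blinfun_apply xs q = 1" using xs by (simp_all add: Pi_X_iff)
      thus ?thesis unfolding Ta K_functional_def by simp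
    qed
    obtain S where SK: "K_operator sm S" and nrS: "num_radius sm S = 1"
      and Sq: "norm (blinfun_apply xs (blinfun_apply S q)) = 1" and ST: "norm (S - T) < \<epsilon>"
      using H[of T q xs] TK nrT xs kq xsT by auto
    have nS: "norm S \<le> 1" by (rule norm_le_one_of_nr[OF ne ni SK nrS])
    have xsK: "K_functional sm xs" and nxs: "norm xs = 1" using xs by (simp_all add: Pi_X_iff)
    define h where "h = xs o\<^sub>L S"
    have hK: "K_functional sm h"
      using xsK SK unfolding h_def K_functional_def K_operator_def by simp
    have nh: "norm h \<le> 1"
      unfolding h_def using norm_blinfun_compose[of xs S] nxs nS by simp
    have hq: "norm (blinfun_apply h q) = 1" using Sq by (simp add: h_def)
    have "norm (h - k) \<le> norm (S - T)"
    proof (rule norm_blinfun_bound)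
      fix y
      have "blinfun_apply (h - k) y = blinfun_apply xs (blinfun_apply (S - T) y)"
      proof -
        have "blinfun_apply k y = blinfun_apply xs (blinfun_apply T y)"
          using xsK unfolding Ta K_functional_def using xs by (simp add: Pi_X_iff)
        thus ?thesis by (simp add: h_def blinfun.diff_left blinfun.diff_right)
      qed
      also have "norm \<dots> \<le> norm xs * (norm (S - T) * norm y)"
        using norm_blinfun[of xs "blinfun_apply (S - T) y"] mult_left_mono[OF norm_blinfun[of "S - T" y] norm_ge_zero[of xs]]
        by linarith
      finally show "norm (blinfun_apply (h - k) y) \<le> norm (S - T) * norm y" using nxs by simp
    qed simp
    hence "norm (h - k) < \<epsilon>" using ST by simp
    thus "\<exists>h. K_functional sm h \<and> norm h \<le> 1 \<and> norm (blinfun_apply h q) = 1 \<and> norm (h - k) < \<epsilon>"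
      using hK nh hq by blast
  qed
qed

end


context
  fixes sm :: "'k::real_normed_field \<Rightarrow> 'a::real_normed_vector \<Rightarrow> 'a"
  assumes sa: "scalar_action sm"
begin

lemma one_side:
  assumes e: "\<epsilon> > 0"
    and P: "\<And>q k. norm q = 1 \<Longrightarrow> K_functional sm k \<Longrightarrow> norm k = 1 \<Longrightarrow> norm (blinfun_apply k q) > 1 - \<eta> \<Longrightarrow>
      (\<exists>h. K_functional sm h \<and> norm h \<le> 1 \<and> norm (blinfun_apply h q) = 1 \<and> norm (h - k) < \<epsilon>)"
    and x: "norm x = 1" and y: "norm y = 1"
    and kK: "K_functional sm k" and nk: "norm k = 1" and kx: "blinfun_apply k x = 1"
    and t: "0 < \<tau>" "\<tau> \<le> 1/2" "2 * \<tau> < \<eta>"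
  shows "\<exists>h'. K_functional sm h' \<and> norm h' \<le> 1 \<and> blinfun_apply h' (x + \<tau> *\<^sub>R y) = of_real (norm (x + \<tau> *\<^sub>R y))
              \<and> norm (h' - k) \<le> 2 * \<epsilon> + 4 * \<tau>"
proof -
  define a where "a = x + \<tau> *\<^sub>R y"
  have nty: "norm (\<tau> *\<^sub>R y) = \<tau>" using t y by simp
  have na_up: "norm a \<le> 1 + \<tau>" unfolding a_def using norm_triangle_ineq[of x "\<tau> *\<^sub>R y"] x nty by simp
  have na_lo: "1 - \<tau> \<le> norm a" unfolding a_def using norm_diff_ineq[of x "\<tau> *\<^sub>R y"] x nty by simp
  have na_half: "norm a \<ge> 1/2" using na_lo t by simp
  have apos: "norm a > 0" using na_half by linarith
  have ka: "blinfun_apply k a = 1 + of_real \<tau> * blinfun_apply k y"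
    by (simp add: a_def blinfun.add_right blinfun.scaleR_right kx scaleR_conv_of_real)
  have nky: "norm (blinfun_apply k y) \<le> 1" using norm_blinfun[of k y] nk y by simp
  have ntky: "norm (of_real \<tau> * blinfun_apply k y) \<le> \<tau>"
    using nky t by (simp add: norm_mult mult_left_le)
  have nka: "norm (blinfun_apply k a) \<ge> 1 - \<tau>"
    using norm_diff_ineq[of "1::'k" "of_real \<tau> * blinfun_apply k y"] ntky unfolding ka by simp
  define q where "q = (1 / norm a) *\<^sub>R a"
  have nq: "norm q = 1" using apos by (simp add: q_def)
  have nkq: "norm (blinfun_apply k q) = norm (blinfun_apply k a) / norm a"
    using apos by (simp add: q_def blinfun.scaleR_right)
  have "1 - \<eta> < (1 - \<tau>) / (1 + \<tau>)"
  proof -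
    have "(1 - \<eta>) * (1 + \<tau>) = 1 + \<tau> - \<eta> - \<eta> * \<tau>" by (simp add: algebra_simps)
    also have "\<dots> < 1 - \<tau>" using t by (smt (verit) mult_pos_pos)
    finally show ?thesis using t by (simp add: field_simps)
  qed
  also have "(1 - \<tau>) / (1 + \<tau>) \<le> norm (blinfun_apply k a) / norm a"
    using na_up nka t apos by (intro frac_le) auto
  finally have kq: "norm (blinfun_apply k q) > 1 - \<eta>" using nkq by simp
  obtain h where hK: "K_functional sm h" and nh: "norm h \<le> 1" and hq: "norm (blinfun_apply h q) = 1"
    and hk: "norm (h - k) < \<epsilon>" using P[OF nq kK nk kq] by blast
  have ha_eq: "blinfun_apply h a = norm a *\<^sub>R blinfun_apply h q"
    using apos by (simp add: q_def blinfun.scaleR_right)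
  have nha: "norm (blinfun_apply h a) = norm a" using ha_eq hq by simp
  have ha0: "blinfun_apply h a \<noteq> 0" using nha apos by auto
  define c where "c = of_real (norm a) / blinfun_apply h a"
  have nc: "norm c = 1" using nha apos by (simp add: c_def norm_divide)
  have cha: "c * blinfun_apply h a = of_real (norm a)" using ha0 by (simp add: c_def)
  define h' where "h' = Blinfun (\<lambda>z. c * blinfun_apply h z)"
  have blh': "bounded_linear (\<lambda>z. c * blinfun_apply h z)"
    using bounded_linear_compose[OF bounded_linear_mult_right[of c] blinfun.bounded_linear_right[of h]]
    by (simp add: o_def)
  have h'a: "blinfun_apply h' z = c * blinfun_apply h z" for z
    unfolding h'_def using blh' by (simp add: bounded_linear_Blinfun_apply)
  have h'K: "K_functional sm h'"
    using hK unfolding K_functional_def h'a by (simp add: mult.left_commute)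
  have nh': "norm h' \<le> 1"
  proof (rule norm_blinfun_bound)
    fix z
    have "norm (blinfun_apply h' z) = norm (blinfun_apply h z)" by (simp add: h'a norm_mult nc)
    also have "\<dots> \<le> norm h * norm z" by (rule norm_blinfun)
    also have "\<dots> \<le> 1 * norm z" using nh by (intro mult_right_mono) auto
    finally show "norm (blinfun_apply h' z) \<le> 1 * norm z" .
  qed simp
  have c1: "norm (c - 1) \<le> \<epsilon> + 4 * \<tau>"
  proof -
    have "c - 1 = (of_real (norm a) - blinfun_apply h a) / blinfun_apply h a"
      using ha0 by (simp add: c_def field_simps)
    hence nc1: "norm (c - 1) = norm (of_real (norm a) - blinfun_apply h a) / norm a"
      by (simp add: norm_divide nha)
    have "norm (blinfun_apply k a - blinfun_apply h a) = norm (blinfun_apply (k - h) a)"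
      by (simp add: blinfun.diff_left)
    also have "\<dots> \<le> norm (k - h) * norm a" by (rule norm_blinfun)
    also have "\<dots> \<le> \<epsilon> * norm a" using hk by (intro mult_right_mono) (auto simp: norm_minus_commute)
    finally have d1: "norm (blinfun_apply k a - blinfun_apply h a) \<le> \<epsilon> * norm a" .
    have eq: "of_real (norm a) - blinfun_apply k a = of_real (norm a - 1) - of_real \<tau> * blinfun_apply k y"
      by (simp add: ka)
    have "norm (of_real (norm a) - blinfun_apply k a) \<le> norm (of_real (norm a - 1) :: 'k) + norm (of_real \<tau> * blinfun_apply k y)"
      unfolding eq by (rule norm_triangle_ineq4)
    also have "norm (of_real (norm a - 1) :: 'k) = \<bar>norm a - 1\<bar>" by (rule norm_of_real)
    finally have "norm (of_real (norm a) - blinfun_apply k a) \<le> \<bar>norm a - 1\<bar> + \<tau>" using ntky by linarith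
    also have "\<dots> \<le> 2 * \<tau>" using na_up na_lo by simp
    finally have d2: "norm (of_real (norm a) - blinfun_apply k a) \<le> 2 * \<tau>" .
    have "norm (of_real (norm a) - blinfun_apply h a) \<le>
        norm (of_real (norm a) - blinfun_apply k a) + norm (blinfun_apply k a - blinfun_apply h a)"
      using norm_triangle_ineq[of "of_real (norm a) - blinfun_apply k a" "blinfun_apply k a - blinfun_apply h a"] by simp
    also have "\<dots> \<le> 2 * \<tau> + \<epsilon> * norm a" using d1 d2 by simp
    finally have "norm (c - 1) \<le> (2 * \<tau> + \<epsilon> * norm a) / norm a"
      unfolding nc1 using apos by (intro divide_right_mono) auto
    also have "\<dots> = 2 * \<tau> / norm a + \<epsilon>" using apos by (simp add: field_simps)
    also have "2 * \<tau> / norm a \<le> 4 * \<tau>"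
      using na_half t apos by (simp add: field_simps)
    finally show ?thesis by simp
  qed
  have "norm (h' - k) \<le> norm (h - k) + norm (c - 1)"
  proof (rule norm_blinfun_bound)
    fix z
    have "blinfun_apply (h' - k) z = c * (blinfun_apply h z - blinfun_apply k z) + (c - 1) * blinfun_apply k z"
      by (simp add: blinfun.diff_left h'a algebra_simps)
    hence "norm (blinfun_apply (h' - k) z) \<le> norm (blinfun_apply h z - blinfun_apply k z) + norm (c - 1) * norm (blinfun_apply k z)"
      using norm_triangle_ineq[of "c * (blinfun_apply h z - blinfun_apply k z)" "(c - 1) * blinfun_apply k z"]
      by (simp add: norm_mult nc)
    also have "norm (blinfun_apply h z - blinfun_apply k z) \<le> norm (h - k) * norm z"
      using norm_blinfun[of "h - k" z] by (simp add: blinfun.diff_left)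
    also have "norm (c - 1) * norm (blinfun_apply k z) \<le> norm (c - 1) * norm z"
      using norm_blinfun[of k z] nk by (intro mult_left_mono) auto
    finally show "norm (blinfun_apply (h' - k) z) \<le> (norm (h - k) + norm (c - 1)) * norm z"
      by (simp add: algebra_simps)
  qed simp
  also have "\<dots> \<le> 2 * \<epsilon> + 4 * \<tau>" using hk c1 by simp
  finally have "norm (h' - k) \<le> 2 * \<epsilon> + 4 * \<tau>" .
  moreover have "blinfun_apply h' a = of_real (norm a)" using cha by (simp add: h'a)
  ultimately show ?thesis using h'K nh' unfolding a_def by blast
qed

end


lemma two_sides:
  fixes sm :: "'k::real_normed_field \<Rightarrow> 'a::real_normed_vector \<Rightarrow> 'a" and x y :: 'a
  assumes sa: "scalar_action sm" and e: "\<epsilon> > 0"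
    and P: "\<And>q k. norm q = 1 \<Longrightarrow> K_functional sm k \<Longrightarrow> norm k = 1 \<Longrightarrow> norm (blinfun_apply k q) > 1 - \<eta> \<Longrightarrow>
      (\<exists>h. K_functional sm h \<and> norm h \<le> 1 \<and> norm (blinfun_apply h q) = 1 \<and> norm (h - k) < \<epsilon>)"
    and x: "norm x = 1" and y: "norm y = 1"
    and t: "0 < \<tau>" "\<tau> \<le> 1/2" "2 * \<tau> < \<eta>"
  shows "norm (x + \<tau> *\<^sub>R y) + norm (x - \<tau> *\<^sub>R y) \<le> 2 + \<tau> * (4 * \<epsilon> + 8 * \<tau>)"
proof -
  obtain k where kK: "K_functional sm k" and nk: "norm k = 1" and kx: "blinfun_apply k x = 1"
    using K_HB[OF sa x] by blast
  obtain h where hK: "K_functional sm h" and nh: "norm h \<le> 1"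
    and ha: "blinfun_apply h (x + \<tau> *\<^sub>R y) = of_real (norm (x + \<tau> *\<^sub>R y))" and hk: "norm (h - k) \<le> 2 * \<epsilon> + 4 * \<tau>"
    using one_side[OF sa e P x y kK nk kx t] by blast
  have y': "norm (- y) = 1" using y by simp
  obtain g where gK: "K_functional sm g" and ng: "norm g \<le> 1"
    and gb: "blinfun_apply g (x + \<tau> *\<^sub>R (- y)) = of_real (norm (x + \<tau> *\<^sub>R (- y)))" and gk: "norm (g - k) \<le> 2 * \<epsilon> + 4 * \<tau>"
    using one_side[OF sa e P x y' kK nk kx t] by blast
  have gb': "blinfun_apply g (x - \<tau> *\<^sub>R y) = of_real (norm (x - \<tau> *\<^sub>R y))" using gb by simp
  define A where "A = norm (x + \<tau> *\<^sub>R y)"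
  define B where "B = norm (x - \<tau> *\<^sub>R y)"
  have "(of_real (A + B) :: 'k) = blinfun_apply h (x + \<tau> *\<^sub>R y) + blinfun_apply g (x - \<tau> *\<^sub>R y)"
    using ha gb' by (simp add: A_def B_def)
  also have "\<dots> = (blinfun_apply h x + blinfun_apply g x) + of_real \<tau> * blinfun_apply (h - g) y"
    by (simp add: blinfun.add_right blinfun.diff_right blinfun.scaleR_right blinfun.diff_left scaleR_conv_of_real algebra_simps)
  finally have eq: "(of_real (A + B) :: 'k) = (blinfun_apply h x + blinfun_apply g x) + of_real \<tau> * blinfun_apply (h - g) y" .
  have AB0: "A + B \<ge> 0" by (simp add: A_def B_def)
  have "A + B = norm (of_real (A + B) :: 'k)" using AB0 by (simp only: norm_of_real)
  also have "\<dots> \<le> norm (blinfun_apply h x) + norm (blinfun_apply g x) + \<tau> * norm (blinfun_apply (h - g) y)"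
    unfolding eq using norm_triangle_ineq[of "blinfun_apply h x + blinfun_apply g x" "of_real \<tau> * blinfun_apply (h - g) y"]
      norm_triangle_ineq[of "blinfun_apply h x" "blinfun_apply g x"] t by (simp add: norm_mult)
  also have "norm (blinfun_apply h x) \<le> 1" using norm_blinfun[of h x] nh x by (simp add: mult_le_one)
  also have "norm (blinfun_apply g x) \<le> 1" using norm_blinfun[of g x] ng x by (simp add: mult_le_one)
  also have "norm (blinfun_apply (h - g) y) \<le> 4 * \<epsilon> + 8 * \<tau>"
  proof -
    have "norm (blinfun_apply (h - g) y) \<le> norm (h - g)" using norm_blinfun[of "h - g" y] y by simp
    also have "norm (h - g) \<le> norm (h - k) + norm (g - k)"
      using norm_triangle_ineq4[of "h - k" "g - k"] by simp
    finally show ?thesis using hk gk by simp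
  qed
  hence "\<tau> * norm (blinfun_apply (h - g) y) \<le> \<tau> * (4 * \<epsilon> + 8 * \<tau>)" using t by (intro mult_left_mono) auto
  finally show ?thesis unfolding A_def B_def by simp
qed


theorem mainTheorem4:
  fixes sm :: "'k::real_normed_field \<Rightarrow> 'a::banach \<Rightarrow> 'a"
  assumes "scalar_action sm"
    and "\<exists>x::'a. x \<noteq> 0"
    and "num_index sm = 1"
    and "BPBpp_nu sm"
  shows "uniformly_smooth TYPE('a)"
proof -
  note sa = assms(1) and ni = assms(3) and bp = assms(4)
  obtain x0 :: 'a where x0: "x0 \<noteq> 0" using assms(2) by blast
  define u0 where "u0 = (1 / norm x0) *\<^sub>R x0"
  have nu0: "norm u0 = 1" using x0 by (simp add: u0_def)
  define \<rho> where "\<rho> \<tau> = modulus_smoothness TYPE('a) \<tau>" for \<tau>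
  have main: "\<bar>\<rho> \<tau> / \<tau>\<bar> \<le> 6 * \<epsilon>"
    if e: "\<epsilon> > 0" and P: "\<And>q k. norm q = 1 \<Longrightarrow> K_functional sm k \<Longrightarrow> norm k = 1 \<Longrightarrow> norm (blinfun_apply k q) > 1 - \<eta> \<Longrightarrow>
      (\<exists>h. K_functional sm h \<and> norm h \<le> 1 \<and> norm (blinfun_apply h q) = 1 \<and> norm (h - k) < \<epsilon>)"
      and t: "0 < \<tau>" "\<tau> \<le> 1/2" "2 * \<tau> < \<eta>" "\<tau> \<le> \<epsilon>" for \<epsilon> \<eta> \<tau>
  proof -
    define S where "S = {(norm (x + \<tau> *\<^sub>R y) + norm (x - \<tau> *\<^sub>R y)) / 2 - 1 | x y :: 'a. norm x = 1 \<and> norm y = 1}"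
    have rS: "\<rho> \<tau> = Sup S" by (simp add: \<rho>_def modulus_smoothness_def S_def)
    have ub: "s \<le> \<tau> * (2 * \<epsilon> + 4 * \<tau>)" if sS: "s \<in> S" for s
    proof -
      obtain x y :: 'a where xy: "norm x = 1" "norm y = 1" "s = (norm (x + \<tau> *\<^sub>R y) + norm (x - \<tau> *\<^sub>R y)) / 2 - 1"
        using sS S_def by blast
      have "norm (x + \<tau> *\<^sub>R y) + norm (x - \<tau> *\<^sub>R y) \<le> 2 + \<tau> * (4 * \<epsilon> + 8 * \<tau>)"
        by (rule two_sides[OF sa e P xy(1) xy(2) t(1-3)])
      thus ?thesis using xy(3) by (simp add: algebra_simps)
    qed
    have zS: "0 \<in> S"
    proof -
      have "u0 + \<tau> *\<^sub>R u0 = (1 + \<tau>) *\<^sub>R u0" by (simp add: scaleR_add_left)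
      hence "norm (u0 + \<tau> *\<^sub>R u0) = 1 + \<tau>" using nu0 t by simp
      moreover have "u0 - \<tau> *\<^sub>R u0 = (1 - \<tau>) *\<^sub>R u0" by (simp add: scaleR_diff_left)
      hence "norm (u0 - \<tau> *\<^sub>R u0) = 1 - \<tau>" using nu0 t by simp
      ultimately have "(norm (u0 + \<tau> *\<^sub>R u0) + norm (u0 - \<tau> *\<^sub>R u0)) / 2 - 1 = 0" by simp
      thus ?thesis unfolding S_def using nu0 by force
    qed
    have bdd: "bdd_above S" unfolding bdd_above_def using ub by blast
    have "\<rho> \<tau> \<ge> 0" unfolding rS by (rule cSup_upper[OF zS bdd])
    moreover have "\<rho> \<tau> \<le> \<tau> * (2 * \<epsilon> + 4 * \<tau>)" unfolding rS by (rule cSup_least) (use zS ub in auto)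
    ultimately have "\<bar>\<rho> \<tau> / \<tau>\<bar> \<le> 2 * \<epsilon> + 4 * \<tau>" using t by (simp add: field_simps)
    thus ?thesis using t by simp
  qed
  show ?thesis
    unfolding uniformly_smooth_def \<rho>_def[symmetric]
  proof (rule tendstoI)
    fix e :: real assume e: "e > 0"
    define \<epsilon> where "\<epsilon> = e / 12"
    have ep: "\<epsilon> > 0" using e by (simp add: \<epsilon>_def)
    obtain \<eta> where eta: "\<eta> > 0" and P: "\<And>q k. norm q = 1 \<Longrightarrow> K_functional sm k \<Longrightarrow> norm k = 1 \<Longrightarrow> norm (blinfun_apply k q) > 1 - \<eta> \<Longrightarrow>
      (\<exists>h. K_functional sm h \<and> norm h \<le> 1 \<and> norm (blinfun_apply h q) = 1 \<and> norm (h - k) < \<epsilon>)"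
      using pBPB[OF sa bp ni ep] by blast
    define \<tau>0 where "\<tau>0 = min (min (\<eta> / 2) (1/2)) \<epsilon>"
    have t0: "\<tau>0 > 0" using eta ep by (simp add: \<tau>0_def)
    show "eventually (\<lambda>\<tau>. dist (\<rho> \<tau> / \<tau>) 0 < e) (at_right 0)"
      unfolding eventually_at_right_field
    proof (intro exI[of _ \<tau>0] conjI allI impI)
      show "0 < \<tau>0" by (rule t0)
      fix \<tau> :: real assume t: "0 < \<tau>" "\<tau> < \<tau>0"
      have "\<bar>\<rho> \<tau> / \<tau>\<bar> \<le> 6 * \<epsilon>"
        by (rule main[OF ep P]) (use t in \<open>auto simp: \<tau>0_def\<close>)
      hence "\<bar>\<rho> \<tau> / \<tau>\<bar> \<le> e / 2" by (simp add: \<epsilon>_def)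
      moreover have "dist (\<rho> \<tau> / \<tau>) 0 = \<bar>\<rho> \<tau> / \<tau>\<bar>" by (simp only: dist_real_def diff_0_right)
      ultimately show "dist (\<rho> \<tau> / \<tau>) 0 < e" using e by linarith
    qed
  qed
qed

end
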